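(* Let $n\ge 1$ and consider $\mathbb{R}^{2n}$ with coordinates $(q_1,\dots,q_n,p_1,\dots,p_n)$. Let $J_2$ be the Poisson matrix $\begin{pmatrix}0&I_n\\-I_n&0\end{pmatrix}$ of the standard symplectic bracket, and let $J_3$ be the Poisson matrix of the bracket $\{q_i,q_j\}=e^{p_j}$ for $1\le j\le i-1\le n-1$; $\{q_i,p_i\}=-e^{p_i}+e^{q_i-q_{i-1}}$ for $i=1,\dots,n$; $\{q_i,p_j\}=e^{q_j-q_{j-1}}-e^{q_{j+1}-q_j}$ for $1\le j\le i-1$; $\{p_i,p_{i+1}\}=e^{q_{i+1}-q_i}$ for $i=1,\dots,n-1$; all other brackets of coordinates (not obtained by antisymmetry) being zero, terms with undefined indices ($q_0$, $q_{n+1}$) omitted. Define the recursion operator $\mathcal{R}=J_3J_2^{-1}$, the Poisson tensors $J_j=\mathcal{R}^{j-2}J_2$ for $j\ge 2$, the vector fields $X_i=\mathcal{R}^iX_0$ for $i\ge 0$ where $X_0=\sum_{i=1}^n i\,\frac{\partial}{\partial q_i}+\sum_{i=1}^n\frac{\partial}{\partial p_i}$, and $\chi_j=\mathcal{R}^{j-1}\chi_1$ for $j\ge1$ where $\chi_1=J_2\nabla h_1$ with $h_1=-\sum_{i=1}^n e^{p_i}+\sum_{i=1}^{n-1}e^{q_{i+1}-q_i}$. Let $h_j$ ($j\ge1$) denote Hamiltonian functions of the flows, $\chi_j=J_2\nabla h_j$. Then for all $i\ge 0$: $X_i(h_j)=(i+j)h_{i+j}$ for $j\ge 1$; $\mathcal{L}_{X_i}J_j=(j-i-2)J_{i+j}$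 for $j\ge 2$; $[X_i,X_j]=(j-i)X_{i+j}$ for $j\ge 0$. *)

theory Defs
  imports "HOL-Analysis.Analysis"
begin

text \<open>Points of R^(2n) are functions nat => real; coordinate q_i is x i and
  p_i is x (n+i), for i = 1..n.  Matrix/tensor/vector-field indices range over 1..2n.\<close>

type_synonym pt = "nat \<Rightarrow> real"
type_synonym vfield = "pt \<Rightarrow> nat \<Rightarrow> real"
type_synonym tensor = "pt \<Rightarrow> nat \<Rightarrow> nat \<Rightarrow> real"

definition pd :: "nat \<Rightarrow> (pt \<Rightarrow> real) \<Rightarrow> pt \<Rightarrow> real" where
  "pd c f x = deriv (\<lambda>t. f (x(c := t))) (x c)"

text \<open>e^(q_i - q_(i-1)), omitted (= 0) when an index is undefined.\<close>
definition eqd :: "nat \<Rightarrow> nat \<Rightarrow> pt \<Rightarrow> real" where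
  "eqd n i x = (if 2 \<le> i \<and> i \<le> n then exp (x i - x (i - 1)) else 0)"

text \<open>Listed brackets {x_a, x_b} of the cubic bracket (before antisymmetrisation).\<close>
definition J3_base :: "nat \<Rightarrow> pt \<Rightarrow> nat \<Rightarrow> nat \<Rightarrow> real" where
  "J3_base n x a b =
    (if 1 \<le> a \<and> a \<le> n \<and> 1 \<le> b \<and> b < a then exp (x (n + b))
     else if 1 \<le> a \<and> a \<le> n \<and> b = n + a then - exp (x (n + a)) + eqd n a x
     else if 1 \<le> a \<and> a \<le> n \<and> n + 1 \<le> b \<and> b < n + a
       then eqd n (b - n) x - eqd n (b - n + 1) x
     else if n + 1 \<le> a \<and> a < 2 * n \<and> b = a + 1 then eqd n (a - n + 1) x
     else 0)"

definition J3 :: "nat \<Rightarrow> tensor" where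
  "J3 n x a b = J3_base n x a b - J3_base n x b a"

definition J2 :: "nat \<Rightarrow> nat \<Rightarrow> nat \<Rightarrow> real" where
  "J2 n a b = (if 1 \<le> a \<and> a \<le> n \<and> b = a + n then 1
               else if 1 \<le> b \<and> b \<le> n \<and> a = b + n then -1 else 0)"

definition J2inv :: "nat \<Rightarrow> nat \<Rightarrow> nat \<Rightarrow> real" where
  "J2inv n a b = - J2 n a b"

definition mmul :: "nat \<Rightarrow> tensor \<Rightarrow> tensor \<Rightarrow> tensor" where
  "mmul n A B x a b = (\<Sum>c = 1..2 * n. A x a c * B x c b)"

definition mid :: "nat \<Rightarrow> tensor" where
  "mid n x a b = (if a = b \<and> 1 \<le> a \<and> a \<le> 2 * n then 1 else 0)"

fun mpow :: "nat \<Rightarrow> tensor \<Rightarrow> nat \<Rightarrow> tensor" where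
  "mpow n A 0 = mid n"
| "mpow n A (Suc k) = mmul n A (mpow n A k)"

definition Rop :: "nat \<Rightarrow> tensor" where
  "Rop n = mmul n (J3 n) (\<lambda>x. J2inv n)"

definition Jt :: "nat \<Rightarrow> nat \<Rightarrow> tensor" where
  "Jt n j = mmul n (mpow n (Rop n) (j - 2)) (\<lambda>x. J2 n)"

definition mvec :: "nat \<Rightarrow> tensor \<Rightarrow> vfield \<Rightarrow> vfield" where
  "mvec n A X x a = (\<Sum>b = 1..2 * n. A x a b * X x b)"

definition X0 :: "nat \<Rightarrow> vfield" where
  "X0 n x a = (if 1 \<le> a \<and> a \<le> n then real a
               else if n + 1 \<le> a \<and> a \<le> 2 * n then 1 else 0)"

definition Xf :: "nat \<Rightarrow> nat \<Rightarrow> vfield" where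
  "Xf n i = (mvec n (Rop n) ^^ i) (X0 n)"

definition h1 :: "nat \<Rightarrow> pt \<Rightarrow> real" where
  "h1 n x = - (\<Sum>i = 1..n. exp (x (n + i))) + (\<Sum>i = 1..n - 1. exp (x (i + 1) - x i))"

definition ham_vf :: "nat \<Rightarrow> tensor \<Rightarrow> (pt \<Rightarrow> real) \<Rightarrow> vfield" where
  "ham_vf n J h = mvec n J (\<lambda>x b. pd b h x)"

definition chi :: "nat \<Rightarrow> nat \<Rightarrow> vfield" where
  "chi n j = (mvec n (Rop n) ^^ (j - 1)) (ham_vf n (\<lambda>x. J2 n) (h1 n))"

definition vapp :: "nat \<Rightarrow> vfield \<Rightarrow> (pt \<Rightarrow> real) \<Rightarrow> pt \<Rightarrow> real" where
  "vapp n X f x = (\<Sum>a = 1..2 * n. X x a * pd a f x)"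

definition lie_bracket :: "nat \<Rightarrow> vfield \<Rightarrow> vfield \<Rightarrow> vfield" where
  "lie_bracket n X Y x a = vapp n X (\<lambda>y. Y y a) x - vapp n Y (\<lambda>y. X y a) x"

definition lie_deriv :: "nat \<Rightarrow> vfield \<Rightarrow> tensor \<Rightarrow> tensor" where
  "lie_deriv n X P x a b = vapp n X (\<lambda>y. P y a b) x
     - (\<Sum>c = 1..2 * n. P x c b * pd c (\<lambda>y. X y a) x)
     - (\<Sum>c = 1..2 * n. P x a c * pd c (\<lambda>y. X y b) x)"

end

theory Submission
  imports Defs
begin

definition sm :: "(pt \<Rightarrow> real) \<Rightarrow> bool" where
  "sm f \<longleftrightarrow> (\<forall>x c. (\<lambda>t. f (x(c := t))) differentiable (at (x c)))"

lemma sm_D: "sm f \<Longrightarrow> ((\<lambda>t. f (x(c := t))) has_real_derivative pd c f x) (at (x c))"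
  unfolding sm_def pd_def using DERIV_deriv_iff_real_differentiable by blast

lemma pd_eq: "((\<lambda>t. f (x(c := t))) has_real_derivative D) (at (x c)) \<Longrightarrow> pd c f x = D"
  unfolding pd_def by (rule DERIV_imp_deriv)

lemma smI: "(\<And>x c. \<exists>D. ((\<lambda>t. f (x(c := t))) has_real_derivative D) (at (x c))) \<Longrightarrow> sm f"
  unfolding sm_def using real_differentiable_def by blast

lemma upd_same: "x(c := x c) = x" by simp

lemma sm_const[simp]: "sm (\<lambda>y. k)"
  by (rule smI) (auto intro: DERIV_const)

lemma pd_const[simp]: "pd c (\<lambda>y. k) x = 0"
  by (rule pd_eq) (rule DERIV_const)

lemma sm_add: "sm f \<Longrightarrow> sm g \<Longrightarrow> sm (\<lambda>y. f y + g y)"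
  by (rule smI) (metis DERIV_add sm_D)

lemma pd_add: "sm f \<Longrightarrow> sm g \<Longrightarrow> pd c (\<lambda>y. f y + g y) x = pd c f x + pd c g x"
  by (rule pd_eq) (auto intro: DERIV_add sm_D)

lemma sm_mult: "sm f \<Longrightarrow> sm g \<Longrightarrow> sm (\<lambda>y. f y * g y)"
  apply (rule smI)
  subgoal for x c using DERIV_mult[OF sm_D[of f x c] sm_D[of g x c]] by auto
  done

lemma pd_mult: "sm f \<Longrightarrow> sm g \<Longrightarrow> pd c (\<lambda>y. f y * g y) x = pd c f x * g x + f x * pd c g x"
  apply (rule pd_eq)
  using DERIV_mult[OF sm_D[of f x c] sm_D[of g x c]] by (simp add: upd_same mult.commute)

lemma sm_minus: "sm f \<Longrightarrow> sm (\<lambda>y. - f y)"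
  by (rule smI) (metis DERIV_minus sm_D)

lemma pd_minus: "sm f \<Longrightarrow> pd c (\<lambda>y. - f y) x = - pd c f x"
  by (rule pd_eq) (auto intro: DERIV_minus sm_D)

lemma sm_diff: "sm f \<Longrightarrow> sm g \<Longrightarrow> sm (\<lambda>y. f y - g y)"
  by (rule smI) (metis DERIV_diff sm_D)

lemma pd_diff: "sm f \<Longrightarrow> sm g \<Longrightarrow> pd c (\<lambda>y. f y - g y) x = pd c f x - pd c g x"
  by (rule pd_eq) (auto intro: DERIV_diff sm_D)

lemma sm_cmult: "sm f \<Longrightarrow> sm (\<lambda>y. k * f y)"
  using sm_mult[OF sm_const] by blast

lemma pd_cmult: "sm f \<Longrightarrow> pd c (\<lambda>y. k * f y) x = k * pd c f x"
  by (subst pd_mult) auto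

lemma sm_multc: "sm f \<Longrightarrow> sm (\<lambda>y. f y * k)"
  using sm_mult[OF _ sm_const] by blast

lemma pd_multc: "sm f \<Longrightarrow> pd c (\<lambda>y. f y * k) x = pd c f x * k"
  by (subst pd_mult) auto

lemma sm_sum: "(\<And>i. i \<in> A \<Longrightarrow> sm (f i)) \<Longrightarrow> sm (\<lambda>y. \<Sum>i\<in>A. f i y)"
proof (induction A rule: infinite_finite_induct)
  case (infinite A) then show ?case by simp
next
  case empty then show ?case by simp
next
  case (insert a A) then show ?case by (simp add: sm_add)
qed

lemma pd_sum: "(\<And>i. i \<in> A \<Longrightarrow> sm (f i)) \<Longrightarrow> pd c (\<lambda>y. \<Sum>i\<in>A. f i y) x = (\<Sum>i\<in>A. pd c (f i) x)"
proof (induction A rule: infinite_finite_induct)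
  case (infinite A) then show ?case by simp
next
  case empty then show ?case by simp
next
  case (insert a A)
  have "pd c (\<lambda>y. \<Sum>i\<in>insert a A. f i y) x = pd c (\<lambda>y. f a y + (\<Sum>i\<in>A. f i y)) x"
    using insert by simp
  also have "\<dots> = pd c (f a) x + pd c (\<lambda>y. \<Sum>i\<in>A. f i y) x"
    using insert by (intro pd_add) (auto intro: sm_sum)
  finally show ?case using insert by simp
qed

lemma sm_exp: "sm f \<Longrightarrow> sm (\<lambda>y. exp (f y))"
  apply (rule smI)
  subgoal for x c using DERIV_chain2[OF DERIV_exp sm_D[of f x c]] by auto
  done

lemma pd_exp: "sm f \<Longrightarrow> pd c (\<lambda>y. exp (f y)) x = exp (f x) * pd c f x"
  apply (rule pd_eq)
  using DERIV_chain2[OF DERIV_exp sm_D[of f x c]] by (simp add: upd_same)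

lemma sm_coord[simp]: "sm (\<lambda>y. y i)"
proof (rule smI)
  fix x :: pt and c
  show "\<exists>D. ((\<lambda>t. (x(c := t)) i) has_real_derivative D) (at (x c))"
  proof (cases "c = i")
    case True then show ?thesis by (auto intro: DERIV_ident)
  next
    case False then show ?thesis by (auto intro: DERIV_const)
  qed
qed

lemma pd_coord: "pd c (\<lambda>y. y i) x = (if c = i then 1 else 0)"
proof (cases "c = i")
  case True
  have "((\<lambda>t. (x(c := t)) i) has_real_derivative 1) (at (x c))"
    using True by (simp add: DERIV_ident)
  then show ?thesis using True by (simp add: pd_eq)
next
  case False
  then have "(\<lambda>t. (x(c := t)) i) = (\<lambda>t. x i)" by auto
  then show ?thesis using False unfolding pd_def by simp
qed

lemma sm_if: "sm f \<Longrightarrow> sm g \<Longrightarrow> sm (\<lambda>y. if P then f y else g y)"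
  by (cases P) auto

abbreviation Ix :: "nat \<Rightarrow> nat set" where "Ix n \<equiv> {1..2*n}"

definition smT :: "tensor \<Rightarrow> bool" where "smT A \<longleftrightarrow> (\<forall>a b. sm (\<lambda>y. A y a b))"
definition smV :: "vfield \<Rightarrow> bool" where "smV X \<longleftrightarrow> (\<forall>a. sm (\<lambda>y. X y a))"

definition LRd :: "nat \<Rightarrow> vfield \<Rightarrow> tensor \<Rightarrow> tensor" where
  "LRd n X A x a b = vapp n X (\<lambda>y. A y a b) x
     - (\<Sum>c\<in>Ix n. A x c b * pd c (\<lambda>y. X y a) x)
     + (\<Sum>c\<in>Ix n. A x a c * pd b (\<lambda>y. X y c) x)"

lemma smT_mmul: "smT A \<Longrightarrow> smT B \<Longrightarrow> smT (mmul n A B)"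
  unfolding smT_def mmul_def by (auto intro!: sm_sum sm_mult)

lemma smV_mvec: "smT A \<Longrightarrow> smV X \<Longrightarrow> smV (mvec n A X)"
  unfolding smT_def smV_def mvec_def by (auto intro!: sm_sum sm_mult)

lemma smT_const: "smT (\<lambda>x. M)"
  unfolding smT_def by simp

lemma smT_mid: "smT (mid n)"
  unfolding smT_def mid_def by simp

lemma smT_mpow: "smT A \<Longrightarrow> smT (mpow n A k)"
  by (induction k) (auto simp: smT_mid smT_mmul)

lemma smV_X0: "smV (X0 n)"
  unfolding smV_def X0_def by simp

lemma pd_mmul: "smT A \<Longrightarrow> smT B \<Longrightarrow> pd c (\<lambda>y. mmul n A B y a b) x =
   (\<Sum>e\<in>Ix n. pd c (\<lambda>y. A y a e) x * B x e b + A x a e * pd c (\<lambda>y. B y e b) x)"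
  unfolding mmul_def smT_def by (simp add: pd_sum sm_mult pd_mult)

lemma pd_mvec: "smT A \<Longrightarrow> smV X \<Longrightarrow> pd c (\<lambda>y. mvec n A X y a) x =
   (\<Sum>e\<in>Ix n. pd c (\<lambda>y. A y a e) x * X x e + A x a e * pd c (\<lambda>y. X y e) x)"
  unfolding mvec_def smT_def smV_def by (simp add: pd_sum sm_mult pd_mult)

lemma bracket_mvec:
  assumes "smT A" "smV Y"
  shows "lie_bracket n X (mvec n A Y) x a =
     (\<Sum>b\<in>Ix n. LRd n X A x a b * Y x b) + mvec n A (lie_bracket n X Y) x a"
proof -
  have "lie_bracket n X (mvec n A Y) x a =
      (\<Sum>c\<in>Ix n. X x c * (\<Sum>b\<in>Ix n. pd c (\<lambda>y. A y a b) x * Y x b + A x a b * pd c (\<lambda>y. Y y b) x))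
      - (\<Sum>c\<in>Ix n. (\<Sum>b\<in>Ix n. A x c b * Y x b) * pd c (\<lambda>y. X y a) x)"
    unfolding lie_bracket_def vapp_def by (simp only: pd_mvec[OF assms]) (simp add: mvec_def)
  also have "\<dots> = (\<Sum>b\<in>Ix n. LRd n X A x a b * Y x b) + mvec n A (lie_bracket n X Y) x a"
    unfolding LRd_def vapp_def mvec_def lie_bracket_def
    apply (simp add: sum_distrib_left sum_distrib_right sum.distrib sum_subtractf algebra_simps)
    apply (subst (1 2 3 4) sum.swap)
    apply (simp add: algebra_simps)
    done
  finally show ?thesis .
qed

lemma dsum_eqI:
  assumes "\<And>c e. c \<in> A \<Longrightarrow> e \<in> A \<Longrightarrow> f c e + f e c = g c e + g e c"
  shows "(\<Sum>c\<in>A. \<Sum>e\<in>A. f c e) = (\<Sum>c\<in>A. \<Sum>e\<in>A. (g c e :: real))"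
proof -
  have sw: "(\<Sum>c\<in>A. \<Sum>e\<in>A. h c e) = (\<Sum>c\<in>A. \<Sum>e\<in>A. h e c)" for h :: "_ \<Rightarrow> _ \<Rightarrow> real"
    by (rule sum.swap)
  have "2 * (\<Sum>c\<in>A. \<Sum>e\<in>A. f c e) = (\<Sum>c\<in>A. \<Sum>e\<in>A. f c e) + (\<Sum>c\<in>A. \<Sum>e\<in>A. f e c)"
    using sw[of f] by simp
  also have "\<dots> = (\<Sum>c\<in>A. \<Sum>e\<in>A. f c e + f e c)" by (simp add: sum.distrib)
  also have "\<dots> = (\<Sum>c\<in>A. \<Sum>e\<in>A. g c e + g e c)" using assms by (simp cong: sum.cong)
  also have "\<dots> = (\<Sum>c\<in>A. \<Sum>e\<in>A. g c e) + (\<Sum>c\<in>A. \<Sum>e\<in>A. g e c)" by (simp add: sum.distrib)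
  also have "\<dots> = 2 * (\<Sum>c\<in>A. \<Sum>e\<in>A. g c e)" using sw[of g] by simp
  finally show ?thesis by simp
qed

lemma LRd_mmul:
  assumes "smT A" "smT B"
  shows "LRd n X (mmul n A B) x a b = mmul n (LRd n X A) B x a b + mmul n A (LRd n X B) x a b"
  unfolding LRd_def vapp_def
  apply (simp only: pd_mmul[OF assms])
  unfolding mmul_def LRd_def vapp_def
  apply (simp only: sum_distrib_left sum_distrib_right ring_distribs sum.distrib sum_subtractf sum_negf)
  apply (simp only: sum.distrib[symmetric] sum_subtractf[symmetric])
  apply (rule dsum_eqI)
  apply (simp add: algebra_simps)
  done

lemma lie_deriv_mmul:
  assumes "smT A" "smT B"
  shows "lie_deriv n X (mmul n A B) x a b = mmul n (LRd n X A) B x a b + mmul n A (lie_deriv n X B) x a b"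
  unfolding lie_deriv_def vapp_def
  apply (simp only: pd_mmul[OF assms])
  unfolding mmul_def LRd_def vapp_def
  apply (simp only: sum_distrib_left sum_distrib_right ring_distribs sum.distrib sum_subtractf sum_negf)
  apply (simp only: sum.distrib[symmetric] sum_subtractf[symmetric])
  apply (rule dsum_eqI)
  apply (simp add: algebra_simps)
  done

lemma LRd_mid:
  assumes "a \<in> Ix n" "b \<in> Ix n"
  shows "LRd n X (mid n) x a b = 0"
proof -
  have "vapp n X (\<lambda>y. mid n y a b) x = 0" unfolding vapp_def mid_def by simp
  moreover have "(\<Sum>c\<in>Ix n. mid n x c b * pd c (\<lambda>y. X y a) x) = pd b (\<lambda>y. X y a) x"
  proof -
    have "(\<Sum>c\<in>Ix n. mid n x c b * pd c (\<lambda>y. X y a) x) = (\<Sum>c\<in>Ix n. if c = b then pd b (\<lambda>y. X y a) x else 0)"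
      using assms unfolding mid_def by (intro sum.cong) auto
    then show ?thesis using assms by simp
  qed
  moreover have "(\<Sum>c\<in>Ix n. mid n x a c * pd b (\<lambda>y. X y c) x) = pd b (\<lambda>y. X y a) x"
  proof -
    have "(\<Sum>c\<in>Ix n. mid n x a c * pd b (\<lambda>y. X y c) x) = (\<Sum>c\<in>Ix n. if c = a then pd b (\<lambda>y. X y a) x else 0)"
      using assms unfolding mid_def by (intro sum.cong) auto
    then show ?thesis using assms by simp
  qed
  ultimately show ?thesis unfolding LRd_def by simp
qed

definition Ncond :: "nat \<Rightarrow> tensor \<Rightarrow> bool" where
  "Ncond n R \<longleftrightarrow> (\<forall>x a b c. a \<in> Ix n \<longrightarrow> b \<in> Ix n \<longrightarrow> c \<in> Ix n \<longrightarrow>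
     (\<Sum>d\<in>Ix n. R x d b * pd d (\<lambda>y. R y a c) x - R x d c * pd d (\<lambda>y. R y a b) x)
     - (\<Sum>d\<in>Ix n. R x a d * (pd b (\<lambda>y. R y d c) x - pd c (\<lambda>y. R y d b) x)) = 0)"

lemma LRd_torsion:
  assumes R: "smT R" and X: "smV X" and N: "Ncond n R" and ab: "a \<in> Ix n" "b \<in> Ix n"
  shows "LRd n (mvec n R X) R x a b = mmul n R (LRd n X R) x a b"
proof -
  have T: "(\<Sum>d\<in>Ix n. X x d * ((\<Sum>e\<in>Ix n. R x e d * pd e (\<lambda>y. R y a b) x - R x e b * pd e (\<lambda>y. R y a d) x)
     - (\<Sum>e\<in>Ix n. R x a e * (pd d (\<lambda>y. R y e b) x - pd b (\<lambda>y. R y e d) x)))) = 0"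
  proof -
    have "\<And>d. d \<in> Ix n \<Longrightarrow> (\<Sum>e\<in>Ix n. R x e d * pd e (\<lambda>y. R y a b) x - R x e b * pd e (\<lambda>y. R y a d) x)
     - (\<Sum>e\<in>Ix n. R x a e * (pd d (\<lambda>y. R y e b) x - pd b (\<lambda>y. R y e d) x)) = 0"
      using N ab unfolding Ncond_def by blast
    then show ?thesis by simp
  qed
  have "LRd n (mvec n R X) R x a b - mmul n R (LRd n X R) x a b
     = (\<Sum>d\<in>Ix n. X x d * ((\<Sum>e\<in>Ix n. R x e d * pd e (\<lambda>y. R y a b) x - R x e b * pd e (\<lambda>y. R y a d) x)
     - (\<Sum>e\<in>Ix n. R x a e * (pd d (\<lambda>y. R y e b) x - pd b (\<lambda>y. R y e d) x))))"
    unfolding LRd_def vapp_def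
    apply (simp only: pd_mvec[OF R X])
    unfolding mmul_def LRd_def vapp_def mvec_def
    apply (simp only: sum_distrib_left sum_distrib_right ring_distribs sum.distrib sum_subtractf sum_negf right_diff_distrib)
    apply (simp only: sum.distrib[symmetric] sum_subtractf[symmetric])
    apply (rule dsum_eqI)
    apply (simp add: algebra_simps)
    done
  then show ?thesis using T by simp
qed

lemma mmul_assoc: "mmul n (mmul n A B) C x a b = mmul n A (mmul n B C) x a b"
  unfolding mmul_def by (simp add: sum_distrib_left sum_distrib_right mult.assoc) (rule sum.swap)

lemma mmul_mid_left: "a \<in> Ix n \<Longrightarrow> mmul n (mid n) B x a b = B x a b"
proof -
  assume a: "a \<in> Ix n"
  have "mmul n (mid n) B x a b = (\<Sum>c\<in>Ix n. if c = a then B x a b else 0)"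
    unfolding mmul_def mid_def using a by (intro sum.cong) auto
  then show ?thesis using a by simp
qed

lemma mmul_mid_right: "b \<in> Ix n \<Longrightarrow> mmul n B (mid n) x a b = B x a b"
proof -
  assume b: "b \<in> Ix n"
  have "mmul n B (mid n) x a b = (\<Sum>c\<in>Ix n. if c = b then B x a b else 0)"
    unfolding mmul_def mid_def using b by (intro sum.cong) auto
  then show ?thesis using b by simp
qed

lemma mmul_cong_right: "(\<And>c. c \<in> Ix n \<Longrightarrow> B x c b = B' x c b) \<Longrightarrow> mmul n A B x a b = mmul n A B' x a b"
  unfolding mmul_def by (intro sum.cong) auto

lemma mmul_cong_left: "(\<And>c. c \<in> Ix n \<Longrightarrow> A x a c = A' x a c) \<Longrightarrow> mmul n A B x a b = mmul n A' B x a b"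
  unfolding mmul_def by (intro sum.cong) auto

lemma mpow_add: "a \<in> Ix n \<Longrightarrow> mmul n (mpow n A i) (mpow n A j) x a b = mpow n A (i + j) x a b"
proof (induction i arbitrary: a)
  case 0 then show ?case by (simp add: mmul_mid_left)
next
  case (Suc i)
  have "mmul n (mpow n A (Suc i)) (mpow n A j) x a b = mmul n A (mmul n (mpow n A i) (mpow n A j)) x a b"
    by (simp add: mmul_assoc)
  also have "\<dots> = mmul n A (mpow n A (i + j)) x a b"
    using Suc.IH by (intro mmul_cong_right) auto
  finally show ?case by simp
qed

lemma mpow_Suc_right: "a \<in> Ix n \<Longrightarrow> b \<in> Ix n \<Longrightarrow> mpow n A (Suc k) x a b = mmul n (mpow n A k) A x a b"
proof -
  assume a: "a \<in> Ix n" and b: "b \<in> Ix n"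
  have "mpow n A (Suc k) x a b = mmul n (mpow n A k) (mpow n A 1) x a b"
    using mpow_add[OF a, of A k 1] by simp
  also have "\<dots> = mmul n (mpow n A k) A x a b"
    using b by (intro mmul_cong_right) (simp add: mmul_mid_right)
  finally show ?thesis .
qed

lemma mvec_mmul: "mvec n (mmul n A B) X x a = mvec n A (mvec n B X) x a"
  unfolding mvec_def mmul_def by (simp add: sum_distrib_left sum_distrib_right mult.assoc) (rule sum.swap)

lemma mvec_cong: "(\<And>c. c \<in> Ix n \<Longrightarrow> X x c = X' x c) \<Longrightarrow> mvec n A X x a = mvec n A X' x a"
  unfolding mvec_def by (intro sum.cong) auto

lemma mvec_mid: "a \<in> Ix n \<Longrightarrow> mvec n (mid n) X x a = X x a"
proof -
  assume a: "a \<in> Ix n"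
  have "mvec n (mid n) X x a = (\<Sum>c\<in>Ix n. if c = a then X x a else 0)"
    unfolding mvec_def mid_def using a by (intro sum.cong) auto
  then show ?thesis using a by simp
qed

lemma lie_bracket_cong_right:
  assumes "\<And>y. Y y a = Y' y a" "\<And>c. c \<in> Ix n \<Longrightarrow> Y x c = Y' x c"
  shows "lie_bracket n X Y x a = lie_bracket n X Y' x a"
proof -
  have "(\<lambda>y. Y y a) = (\<lambda>y. Y' y a)" using assms(1) by auto
  moreover have "(\<Sum>c\<in>Ix n. Y x c * pd c (\<lambda>y. X y a) x) = (\<Sum>c\<in>Ix n. Y' x c * pd c (\<lambda>y. X y a) x)"
    using assms(2) by (intro sum.cong) auto
  ultimately show ?thesis unfolding lie_bracket_def vapp_def by simp
qed

lemma mvec_pow_pow: "a \<in> Ix n \<Longrightarrow> mvec n (mpow n A j) (mvec n (mpow n A i) X) x a = mvec n (mpow n A (j + i)) X x a"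
proof -
  assume a: "a \<in> Ix n"
  have "mvec n (mpow n A j) (mvec n (mpow n A i) X) x a = mvec n (mmul n (mpow n A j) (mpow n A i)) X x a"
    by (simp add: mvec_mmul)
  also have "\<dots> = mvec n (mpow n A (j + i)) X x a"
    unfolding mvec_def using mpow_add[OF a] by simp
  finally show ?thesis .
qed

lemma pd_X0: "pd c (\<lambda>y. X0 n y a) x = 0"
proof -
  have "(\<lambda>y. X0 n y a) = (\<lambda>y. X0 n x a)" by (simp add: X0_def)
  then show ?thesis by simp
qed

locale chain =
  fixes n :: nat and R :: tensor
  assumes smR: "smT R"
    and NR: "Ncond n R"
    and L0: "\<And>x a b. a \<in> Ix n \<Longrightarrow> b \<in> Ix n \<Longrightarrow> vapp n (X0 n) (\<lambda>y. R y a b) x = R x a b"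
begin

definition XX :: "nat \<Rightarrow> vfield" where "XX i = (mvec n R ^^ i) (X0 n)"

lemma XX_Suc: "XX (Suc i) = mvec n R (XX i)"
  unfolding XX_def by simp

lemma smV_XX: "smV (XX i)"
  by (induction i) (auto simp: XX_def smV_X0 smV_mvec smR)

lemma smT_pow: "smT (mpow n R k)"
  by (rule smT_mpow[OF smR])

lemma XX_pow: "a \<in> Ix n \<Longrightarrow> XX j x a = mvec n (mpow n R j) (X0 n) x a"
proof (induction j arbitrary: a)
  case 0 then show ?case by (simp add: XX_def mvec_mid)
next
  case (Suc j)
  have "XX (Suc j) x a = mvec n R (XX j) x a" by (simp add: XX_Suc)
  also have "\<dots> = mvec n R (mvec n (mpow n R j) (X0 n)) x a"
    using Suc.IH by (intro mvec_cong) auto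
  also have "\<dots> = mvec n (mpow n R (Suc j)) (X0 n) x a"
    by (simp add: mvec_mmul)
  finally show ?case .
qed

lemma LRX: "a \<in> Ix n \<Longrightarrow> b \<in> Ix n \<Longrightarrow> LRd n (XX i) R x a b = mpow n R (Suc i) x a b"
proof (induction i arbitrary: a b)
  case 0
  then show ?case
    by (simp add: LRd_def XX_def pd_X0 L0 mmul_mid_right)
next
  case (Suc i)
  have "LRd n (XX (Suc i)) R x a b = mmul n R (LRd n (XX i) R) x a b"
    unfolding XX_Suc using Suc.prems by (intro LRd_torsion smR smV_XX NR)
  also have "\<dots> = mmul n R (mpow n R (Suc i)) x a b"
    using Suc by (intro mmul_cong_right) auto
  finally show ?case by simp
qed

lemma LRpow: "a \<in> Ix n \<Longrightarrow> b \<in> Ix n \<Longrightarrow> LRd n (XX i) (mpow n R j) x a b = real j * mpow n R (i + j) x a b"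
proof (induction j arbitrary: a b)
  case 0 then show ?case by (simp add: LRd_mid)
next
  case (Suc j)
  have "LRd n (XX i) (mpow n R (Suc j)) x a b =
     mmul n (LRd n (XX i) R) (mpow n R j) x a b + mmul n R (LRd n (XX i) (mpow n R j)) x a b"
    by (simp add: LRd_mmul smR smT_pow)
  also have "mmul n (LRd n (XX i) R) (mpow n R j) x a b = mmul n (mpow n R (Suc i)) (mpow n R j) x a b"
    using Suc.prems by (intro mmul_cong_left) (simp add: LRX)
  also have "\<dots> = mpow n R (Suc i + j) x a b"
    by (rule mpow_add[OF Suc.prems(1)])
  also have "mmul n R (LRd n (XX i) (mpow n R j)) x a b = mmul n R (\<lambda>x a b. real j * mpow n R (i + j) x a b) x a b"
    using Suc by (intro mmul_cong_right) auto
  also have "\<dots> = real j * mpow n R (Suc (i + j)) x a b"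
    by (simp add: mmul_def sum_distrib_left algebra_simps)
  finally show ?case by (simp add: algebra_simps)
qed

lemma bracket_X0: "a \<in> Ix n \<Longrightarrow> lie_bracket n (X0 n) (XX i) x a = real i * XX i x a"
proof -
  assume a: "a \<in> Ix n"
  have "lie_bracket n (X0 n) (XX i) x a = lie_bracket n (X0 n) (mvec n (mpow n R i) (X0 n)) x a"
    using a by (intro lie_bracket_cong_right) (auto simp: XX_pow)
  also have "\<dots> = (\<Sum>b\<in>Ix n. LRd n (X0 n) (mpow n R i) x a b * X0 n x b)
      + mvec n (mpow n R i) (lie_bracket n (X0 n) (X0 n)) x a"
    by (rule bracket_mvec[OF smT_pow smV_X0])
  also have "(\<Sum>b\<in>Ix n. LRd n (X0 n) (mpow n R i) x a b * X0 n x b)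
      = (\<Sum>b\<in>Ix n. real i * mpow n R i x a b * X0 n x b)"
    using LRpow[OF a, of _ 0 i] by (intro sum.cong) (auto simp: XX_def)
  also have "\<dots> = real i * XX i x a"
    using a by (simp add: XX_pow mvec_def sum_distrib_left mult.assoc)
  also have "mvec n (mpow n R i) (lie_bracket n (X0 n) (X0 n)) x a = 0"
    by (simp add: mvec_def lie_bracket_def)
  finally show ?thesis by simp
qed

lemma bracket_XX: "a \<in> Ix n \<Longrightarrow> lie_bracket n (XX i) (XX j) x a = (real j - real i) * XX (i + j) x a"
proof -
  assume a: "a \<in> Ix n"
  have "lie_bracket n (XX i) (XX j) x a = lie_bracket n (XX i) (mvec n (mpow n R j) (X0 n)) x a"
    using a by (intro lie_bracket_cong_right) (auto simp: XX_pow)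
  also have "\<dots> = (\<Sum>b\<in>Ix n. LRd n (XX i) (mpow n R j) x a b * X0 n x b)
      + mvec n (mpow n R j) (lie_bracket n (XX i) (X0 n)) x a"
    by (rule bracket_mvec[OF smT_pow smV_X0])
  also have "(\<Sum>b\<in>Ix n. LRd n (XX i) (mpow n R j) x a b * X0 n x b)
      = (\<Sum>b\<in>Ix n. real j * mpow n R (i + j) x a b * X0 n x b)"
    using LRpow[OF a] by (intro sum.cong) auto
  also have "\<dots> = real j * XX (i + j) x a"
    using a by (simp add: XX_pow mvec_def sum_distrib_left mult.assoc)
  also have "mvec n (mpow n R j) (lie_bracket n (XX i) (X0 n)) x a
     = mvec n (mpow n R j) (\<lambda>x b. - real i * mvec n (mpow n R i) (X0 n) x b) x a"
  proof (rule mvec_cong)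
    fix c assume c: "c \<in> Ix n"
    have "lie_bracket n (XX i) (X0 n) x c = - lie_bracket n (X0 n) (XX i) x c"
      unfolding lie_bracket_def by simp
    then show "lie_bracket n (XX i) (X0 n) x c = - real i * mvec n (mpow n R i) (X0 n) x c"
      using c by (simp add: bracket_X0 XX_pow)
  qed
  also have "\<dots> = - real i * mvec n (mpow n R j) (mvec n (mpow n R i) (X0 n)) x a"
    by (simp add: mvec_def sum_distrib_left algebra_simps)
  also have "\<dots> = - real i * XX (i + j) x a"
    using a by (simp add: mvec_pow_pow XX_pow add.commute)
  finally show ?thesis by (simp add: algebra_simps)
qed

end

lemma J2_row: "a \<in> Ix n \<Longrightarrow> (\<Sum>c\<in>Ix n. J2 n a c * v c) = (if a \<le> n then v (a + n) else - v (a - n))"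
proof -
  assume a: "a \<in> Ix n"
  show ?thesis
  proof (cases "a \<le> n")
    case True
    have "(\<Sum>c\<in>Ix n. J2 n a c * v c) = (\<Sum>c\<in>Ix n. if c = a + n then v (a + n) else 0)"
      using a True unfolding J2_def by (intro sum.cong) auto
    then show ?thesis using a True by simp
  next
    case False
    have "(\<Sum>c\<in>Ix n. J2 n a c * v c) = (\<Sum>c\<in>Ix n. if c = a - n then - v (a - n) else 0)"
      using a False unfolding J2_def by (intro sum.cong) auto
    then show ?thesis using a False by auto
  qed
qed

lemma J2_col: "b \<in> Ix n \<Longrightarrow> (\<Sum>c\<in>Ix n. v c * J2 n c b) = (if b \<le> n then - v (b + n) else v (b - n))"
proof -
  assume b: "b \<in> Ix n"
  show ?thesis
  proof (cases "b \<le> n")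
    case True
    have "(\<Sum>c\<in>Ix n. v c * J2 n c b) = (\<Sum>c\<in>Ix n. if c = b + n then - v (b + n) else 0)"
      using b True unfolding J2_def by (intro sum.cong) auto
    then show ?thesis using b True by simp
  next
    case False
    have "(\<Sum>c\<in>Ix n. v c * J2 n c b) = (\<Sum>c\<in>Ix n. if c = b - n then v (b - n) else 0)"
      using b False unfolding J2_def by (intro sum.cong) auto
    then show ?thesis using b False by auto
  qed
qed

lemma J2_out: "c \<notin> Ix n \<Longrightarrow> J2 n a c = 0" "c \<notin> Ix n \<Longrightarrow> J2 n c a = 0"
  unfolding J2_def by auto

lemma J2W: "a \<in> Ix n \<Longrightarrow> (\<Sum>c\<in>Ix n. J2 n a c * J2inv n c e) = (if a = e then 1 else 0)"
  unfolding J2inv_def using J2_row[of a n "\<lambda>c. - J2 n c e"]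
  by (auto simp: J2_def)

lemma WJ2: "b \<in> Ix n \<Longrightarrow> (\<Sum>c\<in>Ix n. J2inv n e c * J2 n c b) = (if e = b then 1 else 0)"
  unfolding J2inv_def using J2_col[of b n "\<lambda>c. - J2 n e c"]
  by (auto simp: J2_def)

lemma W_anti: "J2inv n a c = - J2inv n c a"
  unfolding J2inv_def J2_def by auto

definition MM :: "nat \<Rightarrow> vfield \<Rightarrow> tensor" where
  "MM n X x b c = (\<Sum>a\<in>Ix n. pd b (\<lambda>y. X y a) x * J2inv n a c) + (\<Sum>a\<in>Ix n. J2inv n b a * pd c (\<lambda>y. X y a) x)"

lemma JW_apply: "a \<in> Ix n \<Longrightarrow> (\<Sum>p\<in>Ix n. J2 n a p * (\<Sum>e\<in>Ix n. J2inv n p e * F e)) = F a"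
proof -
  assume a: "a \<in> Ix n"
  have "(\<Sum>p\<in>Ix n. J2 n a p * (\<Sum>e\<in>Ix n. J2inv n p e * F e)) = (\<Sum>e\<in>Ix n. (\<Sum>p\<in>Ix n. J2 n a p * J2inv n p e) * F e)"
    by (simp add: sum_distrib_left sum_distrib_right mult.assoc) (rule sum.swap)
  also have "\<dots> = (\<Sum>e\<in>Ix n. if e = a then F a else 0)"
    using a by (intro sum.cong refl) (simp only: J2W[OF a], simp)
  finally show ?thesis using a by simp
qed

lemma WJ_apply: "b \<in> Ix n \<Longrightarrow> (\<Sum>q\<in>Ix n. (\<Sum>e\<in>Ix n. G e * J2inv n e q) * J2 n q b) = G b"
proof -
  assume b: "b \<in> Ix n"
  have "(\<Sum>q\<in>Ix n. (\<Sum>e\<in>Ix n. G e * J2inv n e q) * J2 n q b) = (\<Sum>e\<in>Ix n. G e * (\<Sum>q\<in>Ix n. J2inv n e q * J2 n q b))"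
    by (simp add: sum_distrib_left sum_distrib_right mult.assoc) (rule sum.swap)
  also have "\<dots> = (\<Sum>e\<in>Ix n. if e = b then G b else 0)"
    using b by (intro sum.cong refl) (simp only: WJ2[OF b], simp)
  finally show ?thesis using b by simp
qed

lemma bilM:
  assumes ab: "a \<in> Ix n" "b \<in> Ix n"
  shows "(\<Sum>p\<in>Ix n. J2 n a p * (\<Sum>q\<in>Ix n. MM n X x p q * J2 n q b))
     = (\<Sum>c\<in>Ix n. J2 n a c * pd c (\<lambda>y. X y b) x) + (\<Sum>c\<in>Ix n. pd c (\<lambda>y. X y a) x * J2 n c b)"
proof -
  have "(\<Sum>p\<in>Ix n. J2 n a p * (\<Sum>q\<in>Ix n. MM n X x p q * J2 n q b))
     = (\<Sum>p\<in>Ix n. J2 n a p * (\<Sum>q\<in>Ix n. (\<Sum>e\<in>Ix n. pd p (\<lambda>y. X y e) x * J2inv n e q) * J2 n q b))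
     + (\<Sum>p\<in>Ix n. J2 n a p * (\<Sum>q\<in>Ix n. (\<Sum>e\<in>Ix n. J2inv n p e * pd q (\<lambda>y. X y e) x) * J2 n q b))"
    unfolding MM_def by (simp add: sum.distrib ring_distribs)
  also have "(\<Sum>p\<in>Ix n. J2 n a p * (\<Sum>q\<in>Ix n. (\<Sum>e\<in>Ix n. pd p (\<lambda>y. X y e) x * J2inv n e q) * J2 n q b))
     = (\<Sum>p\<in>Ix n. J2 n a p * pd p (\<lambda>y. X y b) x)"
  proof (intro sum.cong refl)
    fix p show "J2 n a p * (\<Sum>q\<in>Ix n. (\<Sum>e\<in>Ix n. pd p (\<lambda>y. X y e) x * J2inv n e q) * J2 n q b) = J2 n a p * pd p (\<lambda>y. X y b) x"
      using WJ_apply[OF ab(2), of "\<lambda>e. pd p (\<lambda>y. X y e) x"] by simp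
  qed
  also have "(\<Sum>p\<in>Ix n. J2 n a p * (\<Sum>q\<in>Ix n. (\<Sum>e\<in>Ix n. J2inv n p e * pd q (\<lambda>y. X y e) x) * J2 n q b))
     = (\<Sum>q\<in>Ix n. (\<Sum>p\<in>Ix n. J2 n a p * (\<Sum>e\<in>Ix n. J2inv n p e * pd q (\<lambda>y. X y e) x)) * J2 n q b)"
    by (simp add: sum_distrib_left sum_distrib_right mult.assoc) (rule sum.swap)
  also have "\<dots> = (\<Sum>q\<in>Ix n. pd q (\<lambda>y. X y a) x * J2 n q b)"
  proof (intro sum.cong refl)
    fix q show "(\<Sum>p\<in>Ix n. J2 n a p * (\<Sum>e\<in>Ix n. J2inv n p e * pd q (\<lambda>y. X y e) x)) * J2 n q b = pd q (\<lambda>y. X y a) x * J2 n q b"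
      using JW_apply[OF ab(1), of "\<lambda>e. pd q (\<lambda>y. X y e) x"] by simp
  qed
  finally show ?thesis .
qed

definition dOm :: "nat \<Rightarrow> tensor \<Rightarrow> pt \<Rightarrow> nat \<Rightarrow> nat \<Rightarrow> nat \<Rightarrow> real" where
  "dOm n R x d e c = (\<Sum>a\<in>Ix n. J2inv n e a * pd d (\<lambda>y. R y a c) x)"

locale chain2 = chain +
  assumes Sym: "\<And>x a c. a \<in> Ix n \<Longrightarrow> c \<in> Ix n \<Longrightarrow>
      (\<Sum>e\<in>Ix n. R x e a * J2inv n e c) = (\<Sum>e\<in>Ix n. J2inv n a e * R x e c)"
    and dA: "\<And>x d e c. d \<in> Ix n \<Longrightarrow> e \<in> Ix n \<Longrightarrow> c \<in> Ix n \<Longrightarrow> dOm n R x d e c = - dOm n R x d c e"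
    and Cl: "\<And>x d e c. d \<in> Ix n \<Longrightarrow> e \<in> Ix n \<Longrightarrow> c \<in> Ix n \<Longrightarrow>
      dOm n R x d e c + dOm n R x e c d + dOm n R x c d e = 0"
begin

lemma Mstep:
  assumes X: "smV X" and bc: "b \<in> Ix n" "c \<in> Ix n"
  shows "MM n (mvec n R X) x b c = (\<Sum>e\<in>Ix n. MM n X x b e * R x e c) + (\<Sum>a\<in>Ix n. J2inv n b a * LRd n X R x a c)"
proof -
  define Ce where "Ce e = (\<Sum>a\<in>Ix n. pd b (\<lambda>y. R y a e) x * J2inv n a c) + (\<Sum>a\<in>Ix n. J2inv n b a * pd c (\<lambda>y. R y a e) x)
      - (\<Sum>a\<in>Ix n. J2inv n b a * pd e (\<lambda>y. R y a c) x)" for e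
  have Ce0: "Ce e = 0" if e: "e \<in> Ix n" for e
  proof -
    have 1: "(\<Sum>a\<in>Ix n. pd b (\<lambda>y. R y a e) x * J2inv n a c) = - dOm n R x b c e"
      unfolding dOm_def by (subst W_anti) (simp add: sum_negf[symmetric] mult.commute)
    have 2: "(\<Sum>a\<in>Ix n. J2inv n b a * pd c (\<lambda>y. R y a e) x) = dOm n R x c b e"
      unfolding dOm_def ..
    have 3: "(\<Sum>a\<in>Ix n. J2inv n b a * pd e (\<lambda>y. R y a c) x) = dOm n R x e b c"
      unfolding dOm_def ..
    show ?thesis unfolding Ce_def 1 2 3 using Cl[OF e bc(1) bc(2), of x] dA[OF bc(2) e bc(1), of x] by simp
  qed
  have S0: "(\<Sum>a\<in>Ix n. R x a e * J2inv n a c) - (\<Sum>a\<in>Ix n. J2inv n e a * R x a c) = 0" if e: "e \<in> Ix n" for e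
    using Sym[OF e bc(2)] by simp
  have "MM n (mvec n R X) x b c - ((\<Sum>e\<in>Ix n. MM n X x b e * R x e c) + (\<Sum>a\<in>Ix n. J2inv n b a * LRd n X R x a c))
     = (\<Sum>e\<in>Ix n. X x e * Ce e) + (\<Sum>e\<in>Ix n. pd b (\<lambda>y. X y e) x * ((\<Sum>a\<in>Ix n. R x a e * J2inv n a c) - (\<Sum>a\<in>Ix n. J2inv n e a * R x a c)))"
    unfolding MM_def
    apply (simp only: pd_mvec[OF smR X])
    unfolding LRd_def vapp_def Ce_def
    apply (simp only: sum_distrib_left sum_distrib_right ring_distribs sum.distrib sum_subtractf sum_negf right_diff_distrib)
    apply (simp only: sum.distrib[symmetric] sum_subtractf[symmetric])
    apply (rule dsum_eqI)
    apply (simp add: algebra_simps)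
    done
  also have "\<dots> = 0" using Ce0 S0 by simp
  finally show ?thesis by simp
qed

lemma MX: "b \<in> Ix n \<Longrightarrow> c \<in> Ix n \<Longrightarrow> MM n (XX i) x b c = real i * (\<Sum>a\<in>Ix n. J2inv n b a * mpow n R i x a c)"
proof (induction i arbitrary: b c)
  case 0 then show ?case by (simp add: MM_def XX_def pd_X0)
next
  case (Suc i)
  have "MM n (XX (Suc i)) x b c = (\<Sum>e\<in>Ix n. MM n (XX i) x b e * R x e c) + (\<Sum>a\<in>Ix n. J2inv n b a * LRd n (XX i) R x a c)"
    unfolding XX_Suc using Suc.prems by (intro Mstep smV_XX)
  also have "(\<Sum>e\<in>Ix n. MM n (XX i) x b e * R x e c) = (\<Sum>e\<in>Ix n. real i * (\<Sum>a\<in>Ix n. J2inv n b a * mpow n R i x a e) * R x e c)"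
    using Suc by (intro sum.cong) auto
  also have "\<dots> = real i * (\<Sum>a\<in>Ix n. J2inv n b a * (\<Sum>e\<in>Ix n. mpow n R i x a e * R x e c))"
    apply (simp add: sum_distrib_left sum_distrib_right mult.assoc)
    apply (rule sum.swap)
    done
  also have "\<dots> = real i * (\<Sum>a\<in>Ix n. J2inv n b a * mpow n R (Suc i) x a c)"
  proof -
    have "\<And>a. a \<in> Ix n \<Longrightarrow> (\<Sum>e\<in>Ix n. mpow n R i x a e * R x e c) = mpow n R (Suc i) x a c"
      using mpow_Suc_right[OF _ Suc.prems(2)] unfolding mmul_def by metis
    then show ?thesis by (intro arg_cong[where f="\<lambda>t. real i * t"] sum.cong refl) (simp only:)
  qed
  also have "(\<Sum>a\<in>Ix n. J2inv n b a * LRd n (XX i) R x a c) = (\<Sum>a\<in>Ix n. J2inv n b a * mpow n R (Suc i) x a c)"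
    using Suc.prems by (auto intro!: sum.cong simp: LRX)
  finally show ?case by (simp add: algebra_simps)
qed

lemma lieJ2: "a \<in> Ix n \<Longrightarrow> b \<in> Ix n \<Longrightarrow>
   lie_deriv n (XX i) (\<lambda>x. J2 n) x a b = - real i * mmul n (mpow n R i) (\<lambda>x. J2 n) x a b"
proof -
  assume a: "a \<in> Ix n" and b: "b \<in> Ix n"
  have "lie_deriv n (XX i) (\<lambda>x. J2 n) x a b = - ((\<Sum>c\<in>Ix n. J2 n a c * pd c (\<lambda>y. XX i y b) x) + (\<Sum>c\<in>Ix n. pd c (\<lambda>y. XX i y a) x * J2 n c b))"
    unfolding lie_deriv_def vapp_def by (simp add: mult.commute)
  also have "\<dots> = - (\<Sum>p\<in>Ix n. J2 n a p * (\<Sum>q\<in>Ix n. MM n (XX i) x p q * J2 n q b))"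
    using bilM[OF a b] by simp
  also have "(\<Sum>p\<in>Ix n. J2 n a p * (\<Sum>q\<in>Ix n. MM n (XX i) x p q * J2 n q b))
     = (\<Sum>p\<in>Ix n. J2 n a p * (\<Sum>q\<in>Ix n. (real i * (\<Sum>e\<in>Ix n. J2inv n p e * mpow n R i x e q)) * J2 n q b))"
    by (intro sum.cong refl) (simp add: MX)
  also have "\<dots> = real i * (\<Sum>q\<in>Ix n. (\<Sum>p\<in>Ix n. J2 n a p * (\<Sum>e\<in>Ix n. J2inv n p e * mpow n R i x e q)) * J2 n q b)"
    apply (simp add: sum_distrib_left sum_distrib_right mult.assoc mult.left_commute)
    apply (rule sum.swap)
    done
  also have "\<dots> = real i * (\<Sum>q\<in>Ix n. mpow n R i x a q * J2 n q b)"
  proof (intro arg_cong[where f="\<lambda>t. real i * t"] sum.cong refl)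
    fix q show "(\<Sum>p\<in>Ix n. J2 n a p * (\<Sum>e\<in>Ix n. J2inv n p e * mpow n R i x e q)) * J2 n q b = mpow n R i x a q * J2 n q b"
      by (simp only: JW_apply[OF a, of "\<lambda>e. mpow n R i x e q"])
  qed
  finally show ?thesis by (simp add: mmul_def)
qed

lemma lieJ: "2 \<le> j \<Longrightarrow> a \<in> Ix n \<Longrightarrow> b \<in> Ix n \<Longrightarrow>
   lie_deriv n (XX i) (mmul n (mpow n R (j - 2)) (\<lambda>x. J2 n)) x a b
     = (real j - real i - 2) * mmul n (mpow n R (i + j - 2)) (\<lambda>x. J2 n) x a b"
proof -
  assume j: "2 \<le> j" and a: "a \<in> Ix n" and b: "b \<in> Ix n"
  have "lie_deriv n (XX i) (mmul n (mpow n R (j - 2)) (\<lambda>x. J2 n)) x a b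
     = mmul n (LRd n (XX i) (mpow n R (j - 2))) (\<lambda>x. J2 n) x a b + mmul n (mpow n R (j - 2)) (lie_deriv n (XX i) (\<lambda>x. J2 n)) x a b"
    by (rule lie_deriv_mmul[OF smT_pow smT_const])
  also have "mmul n (LRd n (XX i) (mpow n R (j - 2))) (\<lambda>x. J2 n) x a b
      = mmul n (\<lambda>x a b. real (j - 2) * mpow n R (i + (j - 2)) x a b) (\<lambda>x. J2 n) x a b"
    using a by (intro mmul_cong_left) (simp add: LRpow)
  also have "\<dots> = real (j - 2) * mmul n (mpow n R (i + j - 2)) (\<lambda>x. J2 n) x a b"
    using j by (simp add: mmul_def sum_distrib_left mult.assoc)
  also have "mmul n (mpow n R (j - 2)) (lie_deriv n (XX i) (\<lambda>x. J2 n)) x a b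
      = mmul n (mpow n R (j - 2)) (\<lambda>x a b. - real i * mmul n (mpow n R i) (\<lambda>x. J2 n) x a b) x a b"
    using b by (intro mmul_cong_right) (simp add: lieJ2)
  also have "\<dots> = - real i * mmul n (mpow n R (j - 2)) (mmul n (mpow n R i) (\<lambda>x. J2 n)) x a b"
    by (simp add: mmul_def sum_distrib_left algebra_simps)
  also have "\<dots> = - real i * mmul n (mmul n (mpow n R (j - 2)) (mpow n R i)) (\<lambda>x. J2 n) x a b"
    by (simp add: mmul_assoc)
  also have "\<dots> = - real i * mmul n (mpow n R (i + j - 2)) (\<lambda>x. J2 n) x a b"
    using a j mpow_add[OF a, of R "j - 2" i] by (simp add: mmul_def add.commute)
  finally show ?thesis using j by (simp add: algebra_simps of_nat_diff)
qed

end

definition trm :: "nat \<Rightarrow> tensor \<Rightarrow> pt \<Rightarrow> real" where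
  "trm n A x = (\<Sum>a\<in>Ix n. A x a a)"

lemma trm_comm: "trm n (mmul n A B) x = trm n (mmul n B A) x"
  unfolding trm_def mmul_def by (subst sum.swap) (simp add: mult.commute)

lemma trm_cong: "(\<And>a c. a \<in> Ix n \<Longrightarrow> c \<in> Ix n \<Longrightarrow> A x a c = A' x a c) \<Longrightarrow> trm n (mmul n A B) x = trm n (mmul n A' B) x"
  unfolding trm_def mmul_def by (intro sum.cong refl) auto

lemma trm_cong2: "(\<And>a c. a \<in> Ix n \<Longrightarrow> c \<in> Ix n \<Longrightarrow> B x a c = B' x a c) \<Longrightarrow> trm n (mmul n A B) x = trm n (mmul n A B') x"
  unfolding trm_def mmul_def by (intro sum.cong refl) auto

lemma vapp_trm:
  assumes "smT A"
  shows "vapp n X (trm n A) x = trm n (LRd n X A) x"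
proof -
  have "vapp n X (trm n A) x = (\<Sum>c\<in>Ix n. X x c * (\<Sum>a\<in>Ix n. pd c (\<lambda>y. A y a a) x))"
    unfolding vapp_def trm_def using assms unfolding smT_def by (simp add: pd_sum)
  also have "\<dots> = trm n (LRd n X A) x"
    unfolding trm_def LRd_def vapp_def
    apply (simp only: sum_distrib_left sum_distrib_right ring_distribs sum.distrib sum_subtractf sum_negf)
    apply (simp only: sum.distrib[symmetric] sum_subtractf[symmetric])
    apply (rule dsum_eqI)
    apply (simp add: algebra_simps)
    done
  finally show ?thesis .
qed

context chain begin

lemma trLpow_gen:
  assumes X: "smV X"
  shows "trm n (mmul n (mpow n R j) (LRd n X (mpow n R k))) x = real k * trm n (mmul n (mpow n R (j + k - 1)) (LRd n X R)) x"
proof (induction k arbitrary: j)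
  case 0
  have "trm n (mmul n (mpow n R j) (LRd n X (mpow n R 0))) x = trm n (mmul n (mpow n R j) (\<lambda>x a b. 0)) x"
    by (rule trm_cong2) (simp add: LRd_mid)
  then show ?case by (simp add: trm_def mmul_def)
next
  case (Suc k)
  let ?L = "LRd n X R"
  have "trm n (mmul n (mpow n R j) (LRd n X (mpow n R (Suc k)))) x
     = trm n (mmul n (mpow n R j) (\<lambda>x a b. mmul n ?L (mpow n R k) x a b + mmul n R (LRd n X (mpow n R k)) x a b)) x"
    by (rule trm_cong2) (simp add: LRd_mmul smR smT_pow)
  also have "\<dots> = trm n (mmul n (mpow n R j) (mmul n ?L (mpow n R k))) x + trm n (mmul n (mpow n R j) (mmul n R (LRd n X (mpow n R k)))) x"
    by (simp add: trm_def mmul_def ring_distribs sum.distrib)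
  also have "trm n (mmul n (mpow n R j) (mmul n ?L (mpow n R k))) x = trm n (mmul n (mpow n R (j + k)) ?L) x"
  proof -
    have "trm n (mmul n (mpow n R j) (mmul n ?L (mpow n R k))) x = trm n (mmul n (mmul n (mpow n R j) ?L) (mpow n R k)) x"
      by (simp add: trm_def mmul_assoc)
    also have "\<dots> = trm n (mmul n (mpow n R k) (mmul n (mpow n R j) ?L)) x" by (rule trm_comm)
    also have "\<dots> = trm n (mmul n (mmul n (mpow n R k) (mpow n R j)) ?L) x" by (simp add: trm_def mmul_assoc)
    also have "\<dots> = trm n (mmul n (mpow n R (k + j)) ?L) x" by (rule trm_cong) (simp add: mpow_add)
    finally show ?thesis by (simp add: add.commute)
  qed
  also have "trm n (mmul n (mpow n R j) (mmul n R (LRd n X (mpow n R k)))) x = trm n (mmul n (mpow n R (Suc j)) (LRd n X (mpow n R k))) x"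
  proof -
    have "trm n (mmul n (mpow n R j) (mmul n R (LRd n X (mpow n R k)))) x = trm n (mmul n (mmul n (mpow n R j) R) (LRd n X (mpow n R k))) x"
      by (simp add: trm_def mmul_assoc)
    also have "\<dots> = trm n (mmul n (mpow n R (Suc j)) (LRd n X (mpow n R k))) x"
      by (rule trm_cong) (rule mpow_Suc_right[symmetric], auto)
    finally show ?thesis .
  qed
  also have "\<dots> = real k * trm n (mmul n (mpow n R (j + k)) ?L) x"
    using Suc.IH[of "Suc j"] by simp
  finally show ?case by (simp add: algebra_simps)
qed

lemma trLpow: "smV X \<Longrightarrow> trm n (LRd n X (mpow n R k)) x = real k * trm n (mmul n (mpow n R (k - 1)) (LRd n X R)) x"
proof -
  assume X: "smV X"
  have "trm n (LRd n X (mpow n R k)) x = trm n (mmul n (mpow n R 0) (LRd n X (mpow n R k))) x"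
    by (simp add: trm_def mmul_mid_left)
  also have "\<dots> = real k * trm n (mmul n (mpow n R (k - 1)) (LRd n X R)) x"
    using trLpow_gen[OF X, of 0 k] by simp
  finally show ?thesis .
qed

end

definition Eb :: "nat \<Rightarrow> vfield" where "Eb b = (\<lambda>y a. if a = b then 1 else 0)"

lemma smV_Eb: "smV (Eb b)" unfolding smV_def Eb_def by simp

lemma pd_Eb: "pd c (\<lambda>y. Eb b y a) x = 0"
  unfolding Eb_def by simp

lemma vapp_Eb: "b \<in> Ix n \<Longrightarrow> vapp n (Eb b) f x = pd b f x"
proof -
  assume b: "b \<in> Ix n"
  have "vapp n (Eb b) f x = (\<Sum>c\<in>Ix n. if c = b then pd b f x else 0)"
    unfolding vapp_def Eb_def by (intro sum.cong) auto
  then show ?thesis using b by simp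
qed

lemma LRd_Eb: "b \<in> Ix n \<Longrightarrow> LRd n (Eb b) A x a c = pd b (\<lambda>y. A y a c) x"
  unfolding LRd_def by (simp add: vapp_Eb pd_Eb)

lemma mvec_Eb: "b \<in> Ix n \<Longrightarrow> mvec n R (Eb b) x c = R x c b"
proof -
  assume b: "b \<in> Ix n"
  have "mvec n R (Eb b) x c = (\<Sum>d\<in>Ix n. if d = b then R x c b else 0)"
    unfolding mvec_def Eb_def by (intro sum.cong) auto
  then show ?thesis using b by simp
qed

lemma sm_trm: "smT A \<Longrightarrow> sm (trm n A)"
  unfolding trm_def smT_def by (auto intro!: sm_sum)

lemma pd_div: "sm f \<Longrightarrow> pd c (\<lambda>y. f y / k) x = pd c f x / k"
  using pd_multc[of f c "inverse k" x] by (simp add: divide_inverse)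

lemma vapp_div: "sm f \<Longrightarrow> vapp n X (\<lambda>y. f y / k) x = vapp n X f x / k"
  unfolding vapp_def by (simp add: pd_div sum_divide_distrib)

lemma cancel2: "s \<noteq> 0 \<Longrightarrow> s * t / (2 * s) = t / (2::real)"
  by (simp add: field_simps)

lemma cancel3: "s \<noteq> 0 \<Longrightarrow> s * (t / (2 * s)) = t / (2::real)"
  by (simp add: field_simps)

locale chain3 = chain2 +
  assumes RJ: "\<And>x a d. a \<in> Ix n \<Longrightarrow> d \<in> Ix n \<Longrightarrow> (\<Sum>b\<in>Ix n. R x a b * J2 n b d) = (\<Sum>c\<in>Ix n. J2 n a c * R x d c)"
begin

definition hh :: "nat \<Rightarrow> pt \<Rightarrow> real" where
  "hh j x = trm n (mpow n R j) x / (2 * real j)"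

lemma sm_hh: "sm (hh j)"
proof -
  have e: "hh j = (\<lambda>y. trm n (mpow n R j) y * inverse (2 * real j))"
    by (rule ext) (simp only: hh_def divide_inverse)
  show ?thesis unfolding e by (intro sm_multc sm_trm smT_pow)
qed

lemma G1: "b \<in> Ix n \<Longrightarrow> pd b (trm n (mpow n R (Suc m))) x = real (Suc m) * trm n (mmul n (mpow n R m) (LRd n (Eb b) R)) x"
proof -
  assume b: "b \<in> Ix n"
  have "pd b (trm n (mpow n R (Suc m))) x = vapp n (Eb b) (trm n (mpow n R (Suc m))) x"
    using b by (simp add: vapp_Eb)
  also have "\<dots> = trm n (LRd n (Eb b) (mpow n R (Suc m))) x"
    by (rule vapp_trm[OF smT_pow])
  also have "\<dots> = real (Suc m) * trm n (mmul n (mpow n R m) (LRd n (Eb b) R)) x"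
    using trLpow[OF smV_Eb, of b "Suc m" x] by simp
  finally show ?thesis .
qed

lemma G2: "b \<in> Ix n \<Longrightarrow> (\<Sum>c\<in>Ix n. R x c b * pd c (trm n (mpow n R m)) x) = real m * trm n (mmul n (mpow n R m) (LRd n (Eb b) R)) x"
proof -
  assume b: "b \<in> Ix n"
  have sY: "smV (mvec n R (Eb b))" by (intro smV_mvec smR smV_Eb)
  have "(\<Sum>c\<in>Ix n. R x c b * pd c (trm n (mpow n R m)) x) = vapp n (mvec n R (Eb b)) (trm n (mpow n R m)) x"
    unfolding vapp_def using b by (simp add: mvec_Eb)
  also have "\<dots> = trm n (LRd n (mvec n R (Eb b)) (mpow n R m)) x"
    by (rule vapp_trm[OF smT_pow])
  also have "\<dots> = real m * trm n (mmul n (mpow n R (m - 1)) (LRd n (mvec n R (Eb b)) R)) x"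
    by (rule trLpow[OF sY])
  also have "trm n (mmul n (mpow n R (m - 1)) (LRd n (mvec n R (Eb b)) R)) x
      = trm n (mmul n (mpow n R (m - 1)) (mmul n R (LRd n (Eb b) R))) x"
    by (rule trm_cong2) (rule LRd_torsion[OF smR smV_Eb NR], auto)
  also have "\<dots> = trm n (mmul n (mmul n (mpow n R (m - 1)) R) (LRd n (Eb b) R)) x"
    by (simp add: trm_def mmul_assoc)
  finally have *: "(\<Sum>c\<in>Ix n. R x c b * pd c (trm n (mpow n R m)) x)
      = real m * trm n (mmul n (mmul n (mpow n R (m - 1)) R) (LRd n (Eb b) R)) x" .
  show ?thesis
  proof (cases m)
    case 0 then show ?thesis using * by simp
  next
    case (Suc k)
    have "trm n (mmul n (mmul n (mpow n R (m - 1)) R) (LRd n (Eb b) R)) x = trm n (mmul n (mpow n R m) (LRd n (Eb b) R)) x"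
    proof (rule trm_cong)
      fix a c assume "a \<in> Ix n" "c \<in> Ix n"
      then show "mmul n (mpow n R (m - 1)) R x a c = mpow n R m x a c"
        using mpow_Suc_right[of a n c R k x] Suc by simp
    qed
    then show ?thesis using * by simp
  qed
qed

lemma hh_fun: "hh j = (\<lambda>y. trm n (mpow n R j) y / (2 * real j))"
  by (rule ext) (simp only: hh_def)

lemma grad_h: "1 \<le> j \<Longrightarrow> b \<in> Ix n \<Longrightarrow> pd b (hh (Suc j)) x = (\<Sum>c\<in>Ix n. R x c b * pd c (hh j) x)"
proof -
  assume j: "1 \<le> j" and b: "b \<in> Ix n"
  have s: "\<And>k. sm (trm n (mpow n R k))" by (intro sm_trm smT_pow)
  let ?T = "trm n (mmul n (mpow n R j) (LRd n (Eb b) R)) x"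
  have "pd b (hh (Suc j)) x = pd b (trm n (mpow n R (Suc j))) x / (2 * real (Suc j))"
    unfolding hh_fun by (rule pd_div[OF s])
  also have "\<dots> = real (Suc j) * ?T / (2 * real (Suc j))"
    by (simp only: G1[OF b])
  also have "\<dots> = ?T / 2"
    by (rule cancel2) simp
  finally have L: "pd b (hh (Suc j)) x = ?T / 2" .
  have "(\<Sum>c\<in>Ix n. R x c b * pd c (hh j) x) = (\<Sum>c\<in>Ix n. R x c b * (pd c (trm n (mpow n R j)) x / (2 * real j)))"
    unfolding hh_fun by (simp only: pd_div[OF s])
  also have "\<dots> = (\<Sum>c\<in>Ix n. R x c b * pd c (trm n (mpow n R j)) x) / (2 * real j)"
    by (simp only: sum_divide_distrib times_divide_eq_right)
  also have "\<dots> = real j * ?T / (2 * real j)"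
    by (simp only: G2[OF b])
  also have "\<dots> = ?T / 2"
    by (rule cancel2) (use j in simp)
  finally show ?thesis using L by simp
qed

lemma ham_vf_eq: "ham_vf n (\<lambda>x. J2 n) h x a = (\<Sum>b\<in>Ix n. J2 n a b * pd b h x)"
  unfolding ham_vf_def mvec_def ..

lemma chi_iter: "a \<in> Ix n \<Longrightarrow> ((mvec n R ^^ m) (ham_vf n (\<lambda>x. J2 n) (hh 1))) x a = ham_vf n (\<lambda>x. J2 n) (hh (Suc m)) x a"
proof (induction m arbitrary: a)
  case 0 then show ?case by simp
next
  case (Suc m)
  have "((mvec n R ^^ Suc m) (ham_vf n (\<lambda>x. J2 n) (hh 1))) x a = mvec n R ((mvec n R ^^ m) (ham_vf n (\<lambda>x. J2 n) (hh 1))) x a"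
    by simp
  also have "\<dots> = mvec n R (ham_vf n (\<lambda>x. J2 n) (hh (Suc m))) x a"
    using Suc.IH by (intro mvec_cong) auto
  also have "\<dots> = (\<Sum>b\<in>Ix n. R x a b * (\<Sum>c\<in>Ix n. J2 n b c * pd c (hh (Suc m)) x))"
    unfolding mvec_def ham_vf_eq ..
  also have "\<dots> = (\<Sum>c\<in>Ix n. (\<Sum>b\<in>Ix n. R x a b * J2 n b c) * pd c (hh (Suc m)) x)"
    by (simp add: sum_distrib_left sum_distrib_right mult.assoc) (rule sum.swap)
  also have "\<dots> = (\<Sum>c\<in>Ix n. (\<Sum>d\<in>Ix n. J2 n a d * R x c d) * pd c (hh (Suc m)) x)"
  proof (intro sum.cong refl)
    fix c assume c: "c \<in> Ix n"
    show "(\<Sum>b\<in>Ix n. R x a b * J2 n b c) * pd c (hh (Suc m)) x = (\<Sum>d\<in>Ix n. J2 n a d * R x c d) * pd c (hh (Suc m)) x"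
      using RJ[OF Suc.prems c, of x] by simp
  qed
  also have "\<dots> = (\<Sum>d\<in>Ix n. J2 n a d * (\<Sum>c\<in>Ix n. R x c d * pd c (hh (Suc m)) x))"
    by (simp add: sum_distrib_left sum_distrib_right mult.assoc) (rule sum.swap)
  also have "\<dots> = (\<Sum>d\<in>Ix n. J2 n a d * pd d (hh (Suc (Suc m))) x)"
    by (intro sum.cong refl) (simp add: grad_h)
  also have "\<dots> = ham_vf n (\<lambda>x. J2 n) (hh (Suc (Suc m))) x a"
    by (simp only: ham_vf_eq)
  finally show ?case .
qed

lemma Xh: "1 \<le> j \<Longrightarrow> vapp n (XX i) (hh j) x = real (i + j) * hh (i + j) x"
proof -
  assume j: "1 \<le> j"
  have s: "\<And>k. sm (trm n (mpow n R k))" by (intro sm_trm smT_pow)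
  have "vapp n (XX i) (hh j) x = vapp n (XX i) (trm n (mpow n R j)) x / (2 * real j)"
    unfolding hh_def by (rule vapp_div[OF s])
  also have "vapp n (XX i) (trm n (mpow n R j)) x = trm n (LRd n (XX i) (mpow n R j)) x"
    by (rule vapp_trm[OF smT_pow])
  also have "\<dots> = real j * trm n (mpow n R (i + j)) x"
    unfolding trm_def by (simp add: LRpow sum_distrib_left)
  also have "real j * trm n (mpow n R (i + j)) x / (2 * real j) = trm n (mpow n R (i + j)) x / 2"
    by (rule cancel2) (use j in simp)
  also have "\<dots> = real (i + j) * hh (i + j) x"
    unfolding hh_def by (rule cancel3[symmetric]) (use j in simp)
  finally show ?thesis .
qed

end

definition Ed :: "nat \<Rightarrow> nat \<Rightarrow> real" where "Ed i d = (if d = i then 1 else 0)"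
definition qr :: "nat \<Rightarrow> nat \<Rightarrow> nat \<Rightarrow> real" where "qr n j d = (if j \<le> d \<and> d \<le> n then 1 else 0)"
definition ppr :: "nat \<Rightarrow> nat \<Rightarrow> nat \<Rightarrow> real" where "ppr n j d = (if n + j \<le> d \<and> d \<le> 2 * n then 1 else 0)"

text \<open>Generators: Inl m (m = 1..n) for e^(p_m); Inr j (j = 1..n-1) for e^(q_(j+1) - q_j).\<close>

fun gl :: "nat \<Rightarrow> nat + nat \<Rightarrow> nat \<Rightarrow> real" where
  "gl n (Inl m) d = Ed (n + m) d"
| "gl n (Inr j) d = Ed (j + 1) d - Ed j d"

fun gu :: "nat \<Rightarrow> nat + nat \<Rightarrow> nat \<Rightarrow> real" where
  "gu n (Inl m) d = qr n (m + 1) d + Ed (n + m) d"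
| "gu n (Inr j) d = qr n (j + 1) d + Ed (n + j) d"

fun gal :: "nat \<Rightarrow> nat + nat \<Rightarrow> nat \<Rightarrow> real" where
  "gal n (Inl m) d = - Ed (n + m) d"
| "gal n (Inr j) d = Ed (j + 1) d - Ed j d"

fun gw :: "nat \<Rightarrow> nat + nat \<Rightarrow> nat \<Rightarrow> real" where
  "gw n (Inl m) d = Ed m d"
| "gw n (Inr j) d = Ed (n + j + 1) d - Ed (n + j) d"

fun gb :: "nat \<Rightarrow> nat + nat \<Rightarrow> nat \<Rightarrow> real" where
  "gb n (Inl m) d = - Ed m d + ppr n (m + 1) d"
| "gb n (Inr j) d = - Ed j d + ppr n (j + 1) d"

fun gf :: "nat \<Rightarrow> nat + nat \<Rightarrow> pt \<Rightarrow> real" where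
  "gf n (Inl m) x = exp (x (n + m))"
| "gf n (Inr j) x = exp (x (j + 1) - x j)"

definition gC :: "nat \<Rightarrow> nat + nat \<Rightarrow> nat \<Rightarrow> nat \<Rightarrow> real" where
  "gC n k a b = gu n k a * gal n k b + gw n k a * gb n k b"

definition gK :: "nat \<Rightarrow> (nat + nat) set" where
  "gK n = Inl ` {1..n} \<union> Inr ` {1..<n}"

definition pr :: "nat \<Rightarrow> (nat \<Rightarrow> real) \<Rightarrow> (nat \<Rightarrow> real) \<Rightarrow> real" where
  "pr n v w = (\<Sum>d\<in>Ix n. v d * w d)"

lemma pr_Ed_left: "pr n (Ed i) v = (if 1 \<le> i \<and> i \<le> 2 * n then v i else 0)"
proof -
  have "pr n (Ed i) v = (\<Sum>d\<in>Ix n. if d = i then v i else 0)"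
    unfolding pr_def Ed_def by (intro sum.cong) auto
  then show ?thesis by simp
qed

lemma pr_add_left: "pr n (\<lambda>d. f d + g d) v = pr n f v + pr n g v"
  unfolding pr_def by (simp add: ring_distribs sum.distrib)
lemma pr_diff_left: "pr n (\<lambda>d. f d - g d) v = pr n f v - pr n g v"
  unfolding pr_def by (simp add: ring_distribs sum_subtractf)
lemma pr_neg_left: "pr n (\<lambda>d. - f d) v = - pr n f v"
  unfolding pr_def by (simp add: sum_negf)
lemma pr_add_right: "pr n v (\<lambda>d. f d + g d) = pr n v f + pr n v g"
  unfolding pr_def by (simp add: ring_distribs sum.distrib)
lemma pr_diff_right: "pr n v (\<lambda>d. f d - g d) = pr n v f - pr n v g"
  unfolding pr_def by (simp add: ring_distribs sum_subtractf)
lemma pr_comm: "pr n v w = pr n w v"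
  unfolding pr_def by (simp add: mult.commute)
lemma pr_ppr_qr: "pr n (ppr n (Suc j)) (qr n k) = 0"
  unfolding pr_def ppr_def qr_def by (intro sum.neutral) auto

lemma pr_Ed_right: "pr n v (Ed i) = (if 1 \<le> i \<and> i \<le> 2 * n then v i else 0)"
  by (subst pr_comm) (rule pr_Ed_left)

lemmas pr_simps = pr_add_left pr_diff_left pr_neg_left pr_add_right pr_diff_right

lemma gfun_simps:
  "gl n (Inl m) = Ed (n + m)" "gl n (Inr j) = (\<lambda>d. Ed (j + 1) d - Ed j d)"
  "gu n (Inl m) = (\<lambda>d. qr n (m + 1) d + Ed (n + m) d)" "gu n (Inr j) = (\<lambda>d. qr n (j + 1) d + Ed (n + j) d)"
  "gal n (Inl m) = (\<lambda>d. - Ed (n + m) d)" "gal n (Inr j) = (\<lambda>d. Ed (j + 1) d - Ed j d)"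
  "gw n (Inl m) = Ed m" "gw n (Inr j) = (\<lambda>d. Ed (n + j + 1) d - Ed (n + j) d)"
  "gb n (Inl m) = (\<lambda>d. - Ed m d + ppr n (m + 1) d)" "gb n (Inr j) = (\<lambda>d. - Ed j d + ppr n (j + 1) d)"
  by (auto simp: fun_eq_iff)

lemma pr_PP_lu: assumes "a \<in> {1..n}" "b \<in> {1..n}" shows "pr n (gl n (Inl b)) (gu n (Inl a)) = (if a = b then 1 else 0)"
  using assms by (simp only: gfun_simps pr_simps pr_Ed_left pr_Ed_right Suc_eq_plus1[symmetric] pr_ppr_qr) (auto simp: Ed_def qr_def ppr_def)

lemma pr_PP_lw: assumes "a \<in> {1..n}" "b \<in> {1..n}" shows "pr n (gl n (Inl b)) (gw n (Inl a)) = 0"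
  using assms by (simp only: gfun_simps pr_simps pr_Ed_left pr_Ed_right Suc_eq_plus1[symmetric] pr_ppr_qr) (auto simp: Ed_def qr_def ppr_def)

lemma pr_PP_au: assumes "a \<in> {1..n}" "b \<in> {1..n}" shows "pr n (gal n (Inl a)) (gu n (Inl b)) = - (if a = b then 1 else 0)"
  using assms by (simp only: gfun_simps pr_simps pr_Ed_left pr_Ed_right Suc_eq_plus1[symmetric] pr_ppr_qr) (auto simp: Ed_def qr_def ppr_def)

lemma pr_PP_aw: assumes "a \<in> {1..n}" "b \<in> {1..n}" shows "pr n (gal n (Inl a)) (gw n (Inl b)) = 0"
  using assms by (simp only: gfun_simps pr_simps pr_Ed_left pr_Ed_right Suc_eq_plus1[symmetric] pr_ppr_qr) (auto simp: Ed_def qr_def ppr_def)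

lemma pr_PP_bu: assumes "a \<in> {1..n}" "b \<in> {1..n}" shows "pr n (gb n (Inl a)) (gu n (Inl b)) = - (if b + 1 \<le> a then 1 else 0) + (if a + 1 \<le> b then 1 else 0)"
  using assms by (simp only: gfun_simps pr_simps pr_Ed_left pr_Ed_right Suc_eq_plus1[symmetric] pr_ppr_qr) (auto simp: Ed_def qr_def ppr_def)

lemma pr_PP_bw: assumes "a \<in> {1..n}" "b \<in> {1..n}" shows "pr n (gb n (Inl a)) (gw n (Inl b)) = - (if a = b then 1 else 0)"
  using assms by (simp only: gfun_simps pr_simps pr_Ed_left pr_Ed_right Suc_eq_plus1[symmetric] pr_ppr_qr) (auto simp: Ed_def qr_def ppr_def)

lemma pr_QQ_lu: assumes "a \<in> {1..<n}" "b \<in> {1..<n}" shows "pr n (gl n (Inr b)) (gu n (Inr a)) = (if a = b then 1 else 0)"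
  using assms by (simp only: gfun_simps pr_simps pr_Ed_left pr_Ed_right Suc_eq_plus1[symmetric] pr_ppr_qr) (auto simp: Ed_def qr_def ppr_def)

lemma pr_QQ_lw: assumes "a \<in> {1..<n}" "b \<in> {1..<n}" shows "pr n (gl n (Inr b)) (gw n (Inr a)) = 0"
  using assms by (simp only: gfun_simps pr_simps pr_Ed_left pr_Ed_right Suc_eq_plus1[symmetric] pr_ppr_qr) (auto simp: Ed_def qr_def ppr_def)

lemma pr_QQ_au: assumes "a \<in> {1..<n}" "b \<in> {1..<n}" shows "pr n (gal n (Inr a)) (gu n (Inr b)) = (if a = b then 1 else 0)"
  using assms by (simp only: gfun_simps pr_simps pr_Ed_left pr_Ed_right Suc_eq_plus1[symmetric] pr_ppr_qr) (auto simp: Ed_def qr_def ppr_def)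

lemma pr_QQ_aw: assumes "a \<in> {1..<n}" "b \<in> {1..<n}" shows "pr n (gal n (Inr a)) (gw n (Inr b)) = 0"
  using assms by (simp only: gfun_simps pr_simps pr_Ed_left pr_Ed_right Suc_eq_plus1[symmetric] pr_ppr_qr) (auto simp: Ed_def qr_def ppr_def)

lemma pr_QQ_bu: assumes "a \<in> {1..<n}" "b \<in> {1..<n}" shows "pr n (gb n (Inr a)) (gu n (Inr b)) = - (if b + 1 \<le> a then 1 else 0) + (if a + 1 \<le> b then 1 else 0)"
  using assms by (simp only: gfun_simps pr_simps pr_Ed_left pr_Ed_right Suc_eq_plus1[symmetric] pr_ppr_qr) (auto simp: Ed_def qr_def ppr_def)

lemma pr_QQ_bw: assumes "a \<in> {1..<n}" "b \<in> {1..<n}" shows "pr n (gb n (Inr a)) (gw n (Inr b)) = (if a = b then 1 else 0)"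
  using assms by (simp only: gfun_simps pr_simps pr_Ed_left pr_Ed_right Suc_eq_plus1[symmetric] pr_ppr_qr) (auto simp: Ed_def qr_def ppr_def)

lemma pr_PQ_lu: assumes "a \<in> {1..n}" "b \<in> {1..<n}" shows "pr n (gl n (Inr b)) (gu n (Inl a)) = (if b = a then 1 else 0)"
  using assms by (simp only: gfun_simps pr_simps pr_Ed_left pr_Ed_right Suc_eq_plus1[symmetric] pr_ppr_qr) (auto simp: Ed_def qr_def ppr_def)

lemma pr_PQ_lw: assumes "a \<in> {1..n}" "b \<in> {1..<n}" shows "pr n (gl n (Inr b)) (gw n (Inl a)) = (if a = b + 1 then 1 else 0) - (if a = b then 1 else 0)"
  using assms by (simp only: gfun_simps pr_simps pr_Ed_left pr_Ed_right Suc_eq_plus1[symmetric] pr_ppr_qr) (auto simp: Ed_def qr_def ppr_def)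

lemma pr_PQ_au: assumes "a \<in> {1..n}" "b \<in> {1..<n}" shows "pr n (gal n (Inl a)) (gu n (Inr b)) = - (if a = b then 1 else 0)"
  using assms by (simp only: gfun_simps pr_simps pr_Ed_left pr_Ed_right Suc_eq_plus1[symmetric] pr_ppr_qr) (auto simp: Ed_def qr_def ppr_def)

lemma pr_PQ_aw: assumes "a \<in> {1..n}" "b \<in> {1..<n}" shows "pr n (gal n (Inl a)) (gw n (Inr b)) = - ((if a = b + 1 then 1 else 0) - (if a = b then 1 else 0))"
  using assms by (simp only: gfun_simps pr_simps pr_Ed_left pr_Ed_right Suc_eq_plus1[symmetric] pr_ppr_qr) (auto simp: Ed_def qr_def ppr_def)

lemma pr_PQ_bu: assumes "a \<in> {1..n}" "b \<in> {1..<n}" shows "pr n (gb n (Inl a)) (gu n (Inr b)) = - (if b + 1 \<le> a then 1 else 0) + (if a + 1 \<le> b then 1 else 0)"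
  using assms by (simp only: gfun_simps pr_simps pr_Ed_left pr_Ed_right Suc_eq_plus1[symmetric] pr_ppr_qr) (auto simp: Ed_def qr_def ppr_def)

lemma pr_PQ_bw: assumes "a \<in> {1..n}" "b \<in> {1..<n}" shows "pr n (gb n (Inl a)) (gw n (Inr b)) = (if b = a then 1 else 0)"
  using assms by (simp only: gfun_simps pr_simps pr_Ed_left pr_Ed_right Suc_eq_plus1[symmetric] pr_ppr_qr) (auto simp: Ed_def qr_def ppr_def)

lemma pr_QP_lu: assumes "a \<in> {1..<n}" "b \<in> {1..n}" shows "pr n (gl n (Inl b)) (gu n (Inr a)) = (if b = a then 1 else 0)"
  using assms by (simp only: gfun_simps pr_simps pr_Ed_left pr_Ed_right Suc_eq_plus1[symmetric] pr_ppr_qr) (auto simp: Ed_def qr_def ppr_def)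

lemma pr_QP_lw: assumes "a \<in> {1..<n}" "b \<in> {1..n}" shows "pr n (gl n (Inl b)) (gw n (Inr a)) = (if b = a + 1 then 1 else 0) - (if b = a then 1 else 0)"
  using assms by (simp only: gfun_simps pr_simps pr_Ed_left pr_Ed_right Suc_eq_plus1[symmetric] pr_ppr_qr) (auto simp: Ed_def qr_def ppr_def)

lemma pr_QP_au: assumes "a \<in> {1..<n}" "b \<in> {1..n}" shows "pr n (gal n (Inr a)) (gu n (Inl b)) = (if a = b then 1 else 0)"
  using assms by (simp only: gfun_simps pr_simps pr_Ed_left pr_Ed_right Suc_eq_plus1[symmetric] pr_ppr_qr) (auto simp: Ed_def qr_def ppr_def)

lemma pr_QP_aw: assumes "a \<in> {1..<n}" "b \<in> {1..n}" shows "pr n (gal n (Inr a)) (gw n (Inl b)) = (if b = a + 1 then 1 else 0) - (if b = a then 1 else 0)"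
  using assms by (simp only: gfun_simps pr_simps pr_Ed_left pr_Ed_right Suc_eq_plus1[symmetric] pr_ppr_qr) (auto simp: Ed_def qr_def ppr_def)

lemma pr_QP_bu: assumes "a \<in> {1..<n}" "b \<in> {1..n}" shows "pr n (gb n (Inr a)) (gu n (Inl b)) = - (if b + 1 \<le> a then 1 else 0) + (if a + 1 \<le> b then 1 else 0)"
  using assms by (simp only: gfun_simps pr_simps pr_Ed_left pr_Ed_right Suc_eq_plus1[symmetric] pr_ppr_qr) (auto simp: Ed_def qr_def ppr_def)

lemma pr_QP_bw: assumes "a \<in> {1..<n}" "b \<in> {1..n}" shows "pr n (gb n (Inr a)) (gw n (Inl b)) = - (if a = b then 1 else 0)"
  using assms by (simp only: gfun_simps pr_simps pr_Ed_left pr_Ed_right Suc_eq_plus1[symmetric] pr_ppr_qr) (auto simp: Ed_def qr_def ppr_def)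

lemma Rop_explicit: "b \<in> Ix n \<Longrightarrow> Rop n x a b = (if b \<le> n then J3 n x a (b + n) else - J3 n x a (b - n))"
proof -
  assume b: "b \<in> Ix n"
  have "Rop n x a b = - (\<Sum>c\<in>Ix n. J3 n x a c * J2 n c b)"
    unfolding Rop_def mmul_def J2inv_def by (simp add: sum_negf[symmetric])
  also have "\<dots> = (if b \<le> n then J3 n x a (b + n) else - J3 n x a (b - n))"
    using J2_col[OF b, of "\<lambda>c. J3 n x a c"] by simp
  finally show ?thesis .
qed

lemma gK_sum: "(\<Sum>k\<in>gK n. F k) = (\<Sum>m\<in>{1..n}. F (Inl m)) + (\<Sum>j\<in>{1..<n}. F (Inr j))"
  unfolding gK_def
  by (subst sum.union_disjoint) (auto simp: sum.reindex)

lemma sum_shift_delta: fixes c t :: nat and A :: "nat set" shows "finite A \<Longrightarrow> (\<Sum>j\<in>A. if c + j = t then h j else 0) = (if c \<le> t \<and> t - c \<in> A then h (t - c) else (0::real))"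
proof -
  assume A: "finite A"
  have pt: "(if c + j = t then y else 0) = (if j = t - c then (if c \<le> t then y else 0) else (0::real))" for j :: nat and y
    by (cases "c + j = t") auto
  have "(\<Sum>j\<in>A. if c + j = t then h j else 0) = (\<Sum>j\<in>A. if j = t - c then (if c \<le> t then h j else 0) else 0)"
    by (simp only: pt)
  also have "\<dots> = (if c \<le> t \<and> t - c \<in> A then h (t - c) else 0)"
    using A by (simp add: sum.delta')
  finally show ?thesis .
qed

lemma Ppart: shows "(\<Sum>m\<in>{1..n}. gf n (Inl m) x * gC n (Inl m) a b) =
   (if n \<le> b \<and> b - n \<in> {1..n} then - exp (x (n + (b - n))) * (qr n (b - n + 1) a + Ed (n + (b - n)) a) else 0)
 + (if 0 \<le> a \<and> a - 0 \<in> {1..n} then exp (x (n + (a - 0))) * (- Ed (a - 0) b + ppr n (a - 0 + 1) b) else 0)"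
  (is "_ = ?rhs")
proof -
  have "(\<Sum>m\<in>{1..n}. gf n (Inl m) x * gC n (Inl m) a b) =
     (\<Sum>m\<in>{1..n}. (if n + m = b then - exp (x (n + m)) * (qr n (m + 1) a + Ed (n + m) a) else 0)
        + (if 0 + m = a then exp (x (n + m)) * (- Ed m b + ppr n (m + 1) b) else 0))"
    by (intro sum.cong refl) (auto simp: gC_def Ed_def algebra_simps)
  also have "\<dots> = (\<Sum>m\<in>{1..n}. if n + m = b then - exp (x (n + m)) * (qr n (m + 1) a + Ed (n + m) a) else 0)
        + (\<Sum>m\<in>{1..n}. if 0 + m = a then exp (x (n + m)) * (- Ed m b + ppr n (m + 1) b) else 0)"
    by (rule sum.distrib)
  also have "\<dots> = ?rhs"
    by (simp only: sum_shift_delta[OF finite_atLeastAtMost])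
  finally show ?thesis .
qed

lemma Qpart: "(\<Sum>j\<in>{1..<n}. gf n (Inr j) x * gC n (Inr j) a b) =
     (if 1 \<le> b \<and> b - 1 \<in> {1..<n} then exp (x (b - 1 + 1) - x (b - 1)) * (qr n (b - 1 + 1) a + Ed (n + (b - 1)) a) else 0)
   - (if 0 \<le> b \<and> b - 0 \<in> {1..<n} then exp (x (b - 0 + 1) - x (b - 0)) * (qr n (b - 0 + 1) a + Ed (n + (b - 0)) a) else 0)
   + (if n + 1 \<le> a \<and> a - (n + 1) \<in> {1..<n} then exp (x (a - (n + 1) + 1) - x (a - (n + 1))) * (- Ed (a - (n + 1)) b + ppr n (a - (n + 1) + 1) b) else 0)
   - (if n \<le> a \<and> a - n \<in> {1..<n} then exp (x (a - n + 1) - x (a - n)) * (- Ed (a - n) b + ppr n (a - n + 1) b) else 0)"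
  (is "_ = ?rhs")
proof -
  let ?U = "\<lambda>j. exp (x (j + 1) - x j) * (qr n (j + 1) a + Ed (n + j) a)"
  let ?V = "\<lambda>j. exp (x (j + 1) - x j) * (- Ed j b + ppr n (j + 1) b)"
  have "(\<Sum>j\<in>{1..<n}. gf n (Inr j) x * gC n (Inr j) a b) =
     (\<Sum>j\<in>{1..<n}. ((if 1 + j = b then ?U j else 0) - (if 0 + j = b then ?U j else 0))
        + ((if (n + 1) + j = a then ?V j else 0) - (if n + j = a then ?V j else 0)))"
    by (intro sum.cong refl) (auto simp: gC_def Ed_def algebra_simps)
  also have "\<dots> = ((\<Sum>j\<in>{1..<n}. if 1 + j = b then ?U j else 0) - (\<Sum>j\<in>{1..<n}. if 0 + j = b then ?U j else 0))
        + ((\<Sum>j\<in>{1..<n}. if (n + 1) + j = a then ?V j else 0) - (\<Sum>j\<in>{1..<n}. if n + j = a then ?V j else 0))"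
    by (simp only: sum.distrib sum_subtractf)
  also have "\<dots> = ?rhs"
    by (simp only: sum_shift_delta[OF finite_atLeastLessThan])
  finally show ?thesis .
qed

lemma Jqq:
  assumes "1 \<le> a" "a \<le> n" "1 \<le> b" "b \<le> n"
  shows "Rop n x a b = (if a = b then - exp (x (n + a)) + eqd n a x else 0) + (if b < a then eqd n b x - eqd n (b + 1) x else 0)"
  using assms by (auto simp: Rop_explicit J3_def J3_base_def)

lemma Jqp:
  assumes "1 \<le> a" "a \<le> n" "1 \<le> b" "b \<le> n"
  shows "Rop n x a (n + b) = (if a < b then exp (x (n + a)) else 0) - (if b < a then exp (x (n + b)) else 0)"
  using assms by (auto simp: Rop_explicit J3_def J3_base_def)

lemma Jpq:
  assumes "1 \<le> a" "a \<le> n" "1 \<le> b" "b \<le> n"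
  shows "Rop n x (n + a) b = (if b = a + 1 then exp (x b - x a) else 0) - (if a = b + 1 then exp (x a - x b) else 0)"
  using assms by (auto simp: Rop_explicit J3_def J3_base_def eqd_def)

lemma Jpp:
  assumes "1 \<le> a" "a \<le> n" "1 \<le> b" "b \<le> n"
  shows "Rop n x (n + a) (n + b) = (if a = b then - exp (x (n + a)) + eqd n a x else 0) + (if a < b then eqd n a x - eqd n (a + 1) x else 0)"
  using assms by (auto simp: Rop_explicit J3_def J3_base_def)

lemma Gqq:
  assumes "1 \<le> a" "a \<le> n" "1 \<le> b" "b \<le> n"
  shows "(\<Sum>k\<in>gK n. gf n k x * gC n k a b) = (if a = b then - exp (x (n + a)) + eqd n a x else 0) + (if b < a then eqd n b x - eqd n (b + 1) x else 0)"
proof -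
  have "a < b \<or> a = b \<or> b < a" by auto
  then show ?thesis
    using assms by (elim disjE) (simp_all only: gK_sum Ppart Qpart, (simp_all add: Ed_def qr_def ppr_def eqd_def split del: if_split cong: if_cong), auto)
qed

lemma Gqp:
  assumes "1 \<le> a" "a \<le> n" "1 \<le> b" "b \<le> n"
  shows "(\<Sum>k\<in>gK n. gf n k x * gC n k a (n + b)) = (if a < b then exp (x (n + a)) else 0) - (if b < a then exp (x (n + b)) else 0)"
proof -
  have "a < b \<or> a = b \<or> b < a" by auto
  then show ?thesis
    using assms by (elim disjE) (simp_all only: gK_sum Ppart Qpart, (simp_all add: Ed_def qr_def ppr_def eqd_def split del: if_split cong: if_cong), auto)
qed

lemma Gpq:
  assumes "1 \<le> a" "a \<le> n" "1 \<le> b" "b \<le> n"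
  shows "(\<Sum>k\<in>gK n. gf n k x * gC n k (n + a) b) = (if b = a + 1 then exp (x b - x a) else 0) - (if a = b + 1 then exp (x a - x b) else 0)"
proof -
  have "b = a + 1 \<or> a = b + 1 \<or> a = b \<or> (b \<noteq> a + 1 \<and> a \<noteq> b + 1 \<and> a \<noteq> b)" by auto
  then show ?thesis
    using assms by (elim disjE) (simp_all only: gK_sum Ppart Qpart, (simp_all add: Ed_def qr_def ppr_def eqd_def split del: if_split cong: if_cong), auto)
qed

lemma Gpp:
  assumes "1 \<le> a" "a \<le> n" "1 \<le> b" "b \<le> n"
  shows "(\<Sum>k\<in>gK n. gf n k x * gC n k (n + a) (n + b)) = (if a = b then - exp (x (n + a)) + eqd n a x else 0) + (if a < b then eqd n a x - eqd n (a + 1) x else 0)"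
proof -
  have "a < b \<or> a = b \<or> b < a" by auto
  then show ?thesis
    using assms by (elim disjE) (simp_all only: gK_sum Ppart Qpart, (simp_all add: Ed_def qr_def ppr_def eqd_def split del: if_split cong: if_cong), auto)
qed

lemma Rgen:
  assumes a: "a \<in> Ix n" and b: "b \<in> Ix n"
  shows "Rop n x a b = (\<Sum>k\<in>gK n. gf n k x * gC n k a b)"
proof -
  have A: "(1 \<le> a \<and> a \<le> n) \<or> (\<exists>a'. a = n + a' \<and> 1 \<le> a' \<and> a' \<le> n)"
    using a by (cases "a \<le> n") (auto intro: exI[of _ "a - n"])
  have B: "(1 \<le> b \<and> b \<le> n) \<or> (\<exists>b'. b = n + b' \<and> 1 \<le> b' \<and> b' \<le> n)"
    using b by (cases "b \<le> n") (auto intro: exI[of _ "b - n"])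
  from A B show ?thesis
    by (elim disjE exE conjE) (simp_all only: Jqq Gqq Jqp Gqp Jpq Gpq Jpp Gpp)
qed

definition Sg :: "nat \<Rightarrow> nat + nat \<Rightarrow> nat + nat \<Rightarrow> nat \<Rightarrow> nat \<Rightarrow> nat \<Rightarrow> real" where
  "Sg n k l a b c = (\<Sum>d\<in>Ix n. gC n k d b * gl n l d) * gC n l a c - (\<Sum>d\<in>Ix n. gC n k d c * gl n l d) * gC n l a b
     - (\<Sum>d\<in>Ix n. gC n k a d * (gl n l b * gC n l d c - gl n l c * gC n l d b))"

lemma sumC_l: "(\<Sum>d\<in>Ix n. gC n k d b * gl n l d) = pr n (gl n l) (gu n k) * gal n k b + pr n (gl n l) (gw n k) * gb n k b"
  unfolding gC_def pr_def by (simp add: sum.distrib sum_distrib_left sum_distrib_right algebra_simps)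

lemma sumCC: "(\<Sum>d\<in>Ix n. gC n k a d * gC n l d c) =
   gu n k a * (pr n (gal n k) (gu n l) * gal n l c + pr n (gal n k) (gw n l) * gb n l c)
 + gw n k a * (pr n (gb n k) (gu n l) * gal n l c + pr n (gb n k) (gw n l) * gb n l c)"
  unfolding gC_def pr_def by (simp add: sum.distrib sum_distrib_left sum_distrib_right algebra_simps)

lemma Sg_expand: "Sg n k l a b c =
   (pr n (gl n l) (gu n k) * gal n k b + pr n (gl n l) (gw n k) * gb n k b) * gC n l a c
 - (pr n (gl n l) (gu n k) * gal n k c + pr n (gl n l) (gw n k) * gb n k c) * gC n l a b
 - (gl n l b * (gu n k a * (pr n (gal n k) (gu n l) * gal n l c + pr n (gal n k) (gw n l) * gb n l c)
        + gw n k a * (pr n (gb n k) (gu n l) * gal n l c + pr n (gb n k) (gw n l) * gb n l c))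
  - gl n l c * (gu n k a * (pr n (gal n k) (gu n l) * gal n l b + pr n (gal n k) (gw n l) * gb n l b)
        + gw n k a * (pr n (gb n k) (gu n l) * gal n l b + pr n (gb n k) (gw n l) * gb n l b)))"
proof -
  have "(\<Sum>d\<in>Ix n. gC n k a d * (gl n l b * gC n l d c - gl n l c * gC n l d b))
     = gl n l b * (\<Sum>d\<in>Ix n. gC n k a d * gC n l d c) - gl n l c * (\<Sum>d\<in>Ix n. gC n k a d * gC n l d b)"
    by (simp add: sum_distrib_left sum_subtractf algebra_simps)
  then show ?thesis unfolding Sg_def by (simp only: sumC_l sumCC)
qed

lemma galP: "gal n (Inl m) d = - gl n (Inl m) d" by simp
lemma galQ: "gal n (Inr j) d = gl n (Inr j) d" by simp
lemma adj_u: "gu n (Inr j) d = gu n (Inl j) d" by simp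
lemma adj_b: "gb n (Inr j) d = gb n (Inl j) d" by simp
lemma same_u: "j < n \<Longrightarrow> gu n (Inr j) d = gu n (Inl (j + 1)) d + gw n (Inl (j + 1)) d - gw n (Inr j) d"
  by (auto simp: Ed_def qr_def)
lemma same_b: "j < n \<Longrightarrow> gb n (Inr j) d = gb n (Inl (j + 1)) d + gl n (Inl (j + 1)) d + gl n (Inr j) d"
  by (auto simp: Ed_def ppr_def)

lemmas gsimps = gl.simps gu.simps gal.simps gw.simps gb.simps

lemma pair_PP: assumes "m \<in> {1..n}" "m2 \<in> {1..n}"
  shows "Sg n (Inl m) (Inl m2) a b c + Sg n (Inl m2) (Inl m) a b c = 0"
proof -
  have "m < m2 \<or> m = m2 \<or> m2 < m" by auto
  then show ?thesis
    using assms
    by (elim disjE)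
       (simp_all only: Sg_expand pr_PP_lu pr_PP_lw pr_PP_au pr_PP_aw pr_PP_bu pr_PP_bw galP gC_def,
        simp_all add: algebra_simps del: gsimps)
qed

lemma pair_QQ: assumes "j \<in> {1..<n}" "j2 \<in> {1..<n}"
  shows "Sg n (Inr j) (Inr j2) a b c + Sg n (Inr j2) (Inr j) a b c = 0"
proof -
  have "j < j2 \<or> j = j2 \<or> j2 < j" by auto
  then show ?thesis
    using assms
    by (elim disjE)
       (simp_all only: Sg_expand pr_QQ_lu pr_QQ_lw pr_QQ_au pr_QQ_aw pr_QQ_bu pr_QQ_bw galQ gC_def,
        simp_all add: algebra_simps del: gsimps)
qed

lemma pair_PQ: assumes m: "m \<in> {1..n}" and j: "j \<in> {1..<n}"
  shows "Sg n (Inl m) (Inr j) a b c + Sg n (Inr j) (Inl m) a b c = 0"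
proof -
  have jn: "j < n" using j by simp
  have "j = m \<or> j + 1 = m \<or> j + 1 < m \<or> m < j" by auto
  then show ?thesis
  proof (elim disjE)
    assume "j = m"
    then show ?thesis using m j
      by (simp only: Sg_expand pr_PQ_lu pr_PQ_lw pr_PQ_au pr_PQ_aw pr_PQ_bu pr_PQ_bw
             pr_QP_lu pr_QP_lw pr_QP_au pr_QP_aw pr_QP_bu pr_QP_bw galP galQ gC_def adj_u adj_b)
         (simp add: algebra_simps del: gsimps)
  next
    assume "j + 1 = m"
    then show ?thesis using m j jn
      by (simp only: Sg_expand pr_PQ_lu pr_PQ_lw pr_PQ_au pr_PQ_aw pr_PQ_bu pr_PQ_bw
             pr_QP_lu pr_QP_lw pr_QP_au pr_QP_aw pr_QP_bu pr_QP_bw galP galQ gC_def)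
         (simp add: algebra_simps same_u same_b del: gsimps)
  next
    assume "j + 1 < m"
    then show ?thesis using m j
      by (simp only: Sg_expand pr_PQ_lu pr_PQ_lw pr_PQ_au pr_PQ_aw pr_PQ_bu pr_PQ_bw
             pr_QP_lu pr_QP_lw pr_QP_au pr_QP_aw pr_QP_bu pr_QP_bw galP galQ gC_def)
         (simp add: algebra_simps del: gsimps)
  next
    assume "m < j"
    then show ?thesis using m j
      by (simp only: Sg_expand pr_PQ_lu pr_PQ_lw pr_PQ_au pr_PQ_aw pr_PQ_bu pr_PQ_bw
             pr_QP_lu pr_QP_lw pr_QP_au pr_QP_aw pr_QP_bu pr_QP_bw galP galQ gC_def)
         (simp add: algebra_simps del: gsimps)
  qed
qed

lemma pair_all: assumes "k \<in> gK n" "l \<in> gK n"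
  shows "Sg n k l a b c + Sg n l k a b c = 0"
  using assms unfolding gK_def
  by (auto simp: pair_PP pair_QQ pair_PQ add.commute[of "Sg n (Inr _) (Inl _) a b c"] simp del: gsimps)

lemma sm_pd_gf: "sm (gf n k) \<and> pd d (gf n k) x = gl n k d * gf n k x"
proof (cases k)
  case (Inl m)
  have e: "gf n k = (\<lambda>y. exp (y (n + m)))" using Inl by (auto simp: fun_eq_iff)
  show ?thesis unfolding e using Inl by (auto simp: sm_exp pd_exp pd_coord Ed_def)
next
  case (Inr j)
  have e: "gf n k = (\<lambda>y. exp (y (j + 1) - y j))" using Inr by (auto simp: fun_eq_iff)
  have s: "sm (\<lambda>y. y (j + 1) - y j)" by (intro sm_diff sm_coord)
  show ?thesis unfolding e using Inr s by (auto simp: sm_exp pd_exp pd_diff pd_coord Ed_def)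
qed

lemma sm_gf: "sm (gf n k)" using sm_pd_gf by blast
lemma pd_gf: "pd d (gf n k) x = gl n k d * gf n k x" using sm_pd_gf by blast

lemma Rop_fun: "a \<in> Ix n \<Longrightarrow> b \<in> Ix n \<Longrightarrow> (\<lambda>y. Rop n y a b) = (\<lambda>y. \<Sum>k\<in>gK n. gf n k y * gC n k a b)"
  by (rule ext) (rule Rgen)

lemma pdR_gen: "pd d (\<lambda>y. \<Sum>k\<in>gK n. gf n k y * gC n k a b) x = (\<Sum>k\<in>gK n. gl n k d * gf n k x * gC n k a b)"
  by (simp add: pd_sum sm_multc sm_gf pd_multc pd_gf)

lemma pdR: "a \<in> Ix n \<Longrightarrow> b \<in> Ix n \<Longrightarrow> pd d (\<lambda>y. Rop n y a b) x = (\<Sum>k\<in>gK n. gl n k d * gf n k x * gC n k a b)"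
  by (simp add: Rop_fun pd_sum sm_multc sm_gf pd_multc pd_gf)

lemma sm_J3: "sm (\<lambda>y. J3 n y a b)"
  unfolding J3_def J3_base_def eqd_def
  by (intro sm_diff sm_if sm_exp sm_add sm_minus sm_coord sm_const)

lemma smT_Rop: "smT (Rop n)"
  unfolding smT_def Rop_def mmul_def by (intro allI sm_sum sm_multc sm_J3)

lemma sum3: "(\<Sum>d\<in>D. (\<Sum>k\<in>K. A k d) * (\<Sum>l\<in>K. B l d)) = (\<Sum>k\<in>K. \<Sum>l\<in>K. \<Sum>d\<in>D. A k d * B l d :: real)"
proof -
  have "(\<Sum>d\<in>D. (\<Sum>k\<in>K. A k d) * (\<Sum>l\<in>K. B l d)) = (\<Sum>d\<in>D. \<Sum>k\<in>K. \<Sum>l\<in>K. A k d * B l d)"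
    by (simp add: sum_product)
  also have "\<dots> = (\<Sum>k\<in>K. \<Sum>d\<in>D. \<Sum>l\<in>K. A k d * B l d)" by (rule sum.swap)
  also have "\<dots> = (\<Sum>k\<in>K. \<Sum>l\<in>K. \<Sum>d\<in>D. A k d * B l d)" by (intro sum.cong refl) (rule sum.swap)
  finally show ?thesis .
qed

lemma Ncond_Rop: "Ncond n (Rop n)"
  unfolding Ncond_def
proof (intro allI impI)
  fix x a b c assume a: "a \<in> Ix n" and b: "b \<in> Ix n" and c: "c \<in> Ix n"
  let ?F = "\<lambda>k. gf n k x" and ?C = "gC n" and ?L = "gl n" and ?K = "gK n"
  have T1: "(\<Sum>d\<in>Ix n. Rop n x d q * pd d (\<lambda>y. Rop n y p r) x) =
      (\<Sum>k\<in>?K. \<Sum>l\<in>?K. \<Sum>d\<in>Ix n. (?F k * ?C k d q) * (?L l d * ?F l * ?C l p r))"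
    if "p \<in> Ix n" "q \<in> Ix n" "r \<in> Ix n" for p q r
  proof -
    have "(\<Sum>d\<in>Ix n. Rop n x d q * pd d (\<lambda>y. Rop n y p r) x) =
        (\<Sum>d\<in>Ix n. (\<Sum>k\<in>?K. ?F k * ?C k d q) * (\<Sum>l\<in>?K. ?L l d * ?F l * ?C l p r))"
      using that by (intro sum.cong refl) (simp add: Rgen pdR_gen)
    then show ?thesis by (simp only: sum3)
  qed
  have T3: "(\<Sum>d\<in>Ix n. Rop n x p d * pd q (\<lambda>y. Rop n y d r) x) =
      (\<Sum>k\<in>?K. \<Sum>l\<in>?K. \<Sum>d\<in>Ix n. (?F k * ?C k p d) * (?L l q * ?F l * ?C l d r))"
    if "p \<in> Ix n" "q \<in> Ix n" "r \<in> Ix n" for p q r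
  proof -
    have "(\<Sum>d\<in>Ix n. Rop n x p d * pd q (\<lambda>y. Rop n y d r) x) =
        (\<Sum>d\<in>Ix n. (\<Sum>k\<in>?K. ?F k * ?C k p d) * (\<Sum>l\<in>?K. ?L l q * ?F l * ?C l d r))"
      using that by (intro sum.cong refl) (simp add: Rgen pdR_gen)
    then show ?thesis by (simp only: sum3)
  qed
  have "(\<Sum>d\<in>Ix n. Rop n x d b * pd d (\<lambda>y. Rop n y a c) x - Rop n x d c * pd d (\<lambda>y. Rop n y a b) x)
     - (\<Sum>d\<in>Ix n. Rop n x a d * (pd b (\<lambda>y. Rop n y d c) x - pd c (\<lambda>y. Rop n y d b) x))
     = ((\<Sum>d\<in>Ix n. Rop n x d b * pd d (\<lambda>y. Rop n y a c) x) - (\<Sum>d\<in>Ix n. Rop n x d c * pd d (\<lambda>y. Rop n y a b) x))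
     - ((\<Sum>d\<in>Ix n. Rop n x a d * pd b (\<lambda>y. Rop n y d c) x) - (\<Sum>d\<in>Ix n. Rop n x a d * pd c (\<lambda>y. Rop n y d b) x))"
    by (simp add: sum_subtractf right_diff_distrib)
  also have "\<dots> = (\<Sum>k\<in>?K. \<Sum>l\<in>?K. ?F k * ?F l * Sg n k l a b c)"
    unfolding T1[OF a b c] T1[OF a c b] T3[OF a b c] T3[OF a c b] Sg_def
    apply (simp only: sum_subtractf[symmetric])
    apply (intro sum.cong refl)
    apply (simp only: sum_distrib_left sum_distrib_right right_diff_distrib left_diff_distrib)
    apply (simp only: sum_subtractf[symmetric])
    apply (intro sum.cong refl)
    apply (simp add: algebra_simps)
    done
  also have "\<dots> = (\<Sum>k\<in>?K. \<Sum>l\<in>?K. (0::real))"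
  proof (rule dsum_eqI)
    fix k l assume k: "k \<in> gK n" and l: "l \<in> gK n"
    have "?F k * ?F l * Sg n k l a b c + ?F l * ?F k * Sg n l k a b c = ?F k * ?F l * (Sg n k l a b c + Sg n l k a b c)"
      by (simp only: mult.commute[of "?F l" "?F k"] distrib_left)
    also have "\<dots> = 0" by (simp only: pair_all[OF k l] mult_zero_right)
    finally show "?F k * ?F l * Sg n k l a b c + ?F l * ?F k * Sg n l k a b c = 0 + 0" by simp
  qed
  finally show "(\<Sum>d\<in>Ix n. Rop n x d b * pd d (\<lambda>y. Rop n y a c) x - Rop n x d c * pd d (\<lambda>y. Rop n y a b) x)
     - (\<Sum>d\<in>Ix n. Rop n x a d * (pd b (\<lambda>y. Rop n y d c) x - pd c (\<lambda>y. Rop n y d b) x)) = 0" by simp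
qed

lemma X0_gl: "k \<in> gK n \<Longrightarrow> (\<Sum>d\<in>Ix n. X0 n x d * gl n k d) = 1"
proof -
  assume k: "k \<in> gK n"
  have e: "(\<Sum>d\<in>Ix n. X0 n x d * gl n k d) = pr n (gl n k) (X0 n x)"
    unfolding pr_def by (simp add: mult.commute)
  show ?thesis using k unfolding e gK_def
    by (auto simp: gfun_simps pr_simps pr_Ed_left X0_def)
qed

lemma L0_Rop: "a \<in> Ix n \<Longrightarrow> b \<in> Ix n \<Longrightarrow> vapp n (X0 n) (\<lambda>y. Rop n y a b) x = Rop n x a b"
proof -
  assume a: "a \<in> Ix n" and b: "b \<in> Ix n"
  have "vapp n (X0 n) (\<lambda>y. Rop n y a b) x = (\<Sum>d\<in>Ix n. X0 n x d * (\<Sum>k\<in>gK n. gl n k d * gf n k x * gC n k a b))"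
    unfolding vapp_def using a b by (simp add: pdR)
  also have "\<dots> = (\<Sum>k\<in>gK n. (\<Sum>d\<in>Ix n. X0 n x d * gl n k d) * (gf n k x * gC n k a b))"
    by (simp add: sum_distrib_left sum_distrib_right mult.assoc) (rule sum.swap)
  also have "\<dots> = (\<Sum>k\<in>gK n. gf n k x * gC n k a b)"
    by (intro sum.cong refl) (metis X0_gl mult_1)
  also have "\<dots> = Rop n x a b" using a b by (simp add: Rgen)
  finally show ?thesis .
qed

fun geps :: "nat + nat \<Rightarrow> real" where
  "geps (Inl m) = 1" | "geps (Inr j) = -1"

lemma omC: assumes k: "k \<in> gK n" and e: "e \<in> Ix n"
  shows "(\<Sum>a\<in>Ix n. J2inv n e a * gC n k a c) = geps k * (gl n k e * gb n k c - gb n k e * gl n k c)"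
proof -
  have "(\<Sum>a\<in>Ix n. J2inv n e a * gC n k a c) = - (\<Sum>a\<in>Ix n. J2 n e a * (gu n k a * gal n k c + gw n k a * gb n k c))"
    unfolding J2inv_def gC_def by (simp add: sum_negf[symmetric])
  also have "\<dots> = - (if e \<le> n then gu n k (e + n) * gal n k c + gw n k (e + n) * gb n k c
                          else - (gu n k (e - n) * gal n k c + gw n k (e - n) * gb n k c))"
    by (simp only: J2_row[OF e])
  also have "\<dots> = geps k * (gl n k e * gb n k c - gb n k e * gl n k c)"
    using k e unfolding gK_def by (auto simp: Ed_def qr_def ppr_def algebra_simps)
  finally show ?thesis .
qed

lemma Om_gen: "e \<in> Ix n \<Longrightarrow> c \<in> Ix n \<Longrightarrow>
   (\<Sum>a\<in>Ix n. J2inv n e a * Rop n x a c) = (\<Sum>k\<in>gK n. gf n k x * (geps k * (gl n k e * gb n k c - gb n k e * gl n k c)))"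
proof -
  assume e: "e \<in> Ix n" and c: "c \<in> Ix n"
  have "(\<Sum>a\<in>Ix n. J2inv n e a * Rop n x a c) = (\<Sum>a\<in>Ix n. J2inv n e a * (\<Sum>k\<in>gK n. gf n k x * gC n k a c))"
    using c by (intro sum.cong refl) (simp add: Rgen)
  also have "\<dots> = (\<Sum>k\<in>gK n. gf n k x * (\<Sum>a\<in>Ix n. J2inv n e a * gC n k a c))"
    by (simp add: sum_distrib_left algebra_simps) (rule sum.swap)
  also have "\<dots> = (\<Sum>k\<in>gK n. gf n k x * (geps k * (gl n k e * gb n k c - gb n k e * gl n k c)))"
    by (intro sum.cong refl) (simp only: omC[OF _ e])
  finally show ?thesis .
qed

lemma dOm_gen: "e \<in> Ix n \<Longrightarrow> c \<in> Ix n \<Longrightarrow>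
   dOm n (Rop n) x d e c = (\<Sum>k\<in>gK n. gl n k d * gf n k x * (geps k * (gl n k e * gb n k c - gb n k e * gl n k c)))"
proof -
  assume e: "e \<in> Ix n" and c: "c \<in> Ix n"
  have "dOm n (Rop n) x d e c = (\<Sum>a\<in>Ix n. J2inv n e a * (\<Sum>k\<in>gK n. gl n k d * gf n k x * gC n k a c))"
    unfolding dOm_def using c by (intro sum.cong refl) (simp add: pdR)
  also have "\<dots> = (\<Sum>k\<in>gK n. gl n k d * gf n k x * (\<Sum>a\<in>Ix n. J2inv n e a * gC n k a c))"
    by (simp add: sum_distrib_left algebra_simps) (rule sum.swap)
  also have "\<dots> = (\<Sum>k\<in>gK n. gl n k d * gf n k x * (geps k * (gl n k e * gb n k c - gb n k e * gl n k c)))"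
    by (intro sum.cong refl) (simp only: omC[OF _ e])
  finally show ?thesis .
qed

lemma Sym_Rop: "a \<in> Ix n \<Longrightarrow> c \<in> Ix n \<Longrightarrow>
   (\<Sum>e\<in>Ix n. Rop n x e a * J2inv n e c) = (\<Sum>e\<in>Ix n. J2inv n a e * Rop n x e c)"
proof -
  assume a: "a \<in> Ix n" and c: "c \<in> Ix n"
  have "(\<Sum>e\<in>Ix n. Rop n x e a * J2inv n e c) = - (\<Sum>e\<in>Ix n. J2inv n c e * Rop n x e a)"
    by (subst W_anti) (simp add: sum_negf[symmetric] mult.commute)
  also have "\<dots> = (\<Sum>e\<in>Ix n. J2inv n a e * Rop n x e c)"
    by (simp only: Om_gen[OF c a] Om_gen[OF a c]) (simp add: sum_negf[symmetric] algebra_simps)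
  finally show ?thesis .
qed

lemma dA_Rop: "d \<in> Ix n \<Longrightarrow> e \<in> Ix n \<Longrightarrow> c \<in> Ix n \<Longrightarrow> dOm n (Rop n) x d e c = - dOm n (Rop n) x d c e"
  by (simp add: dOm_gen sum_negf[symmetric] algebra_simps)

lemma Cl_Rop: "d \<in> Ix n \<Longrightarrow> e \<in> Ix n \<Longrightarrow> c \<in> Ix n \<Longrightarrow>
   dOm n (Rop n) x d e c + dOm n (Rop n) x e c d + dOm n (Rop n) x c d e = 0"
  by (simp add: dOm_gen sum.distrib[symmetric] algebra_simps)

lemma RJ_Rop: "a \<in> Ix n \<Longrightarrow> d \<in> Ix n \<Longrightarrow>
   (\<Sum>b\<in>Ix n. Rop n x a b * J2 n b d) = (\<Sum>c\<in>Ix n. J2 n a c * Rop n x d c)"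
proof -
  assume a: "a \<in> Ix n" and d: "d \<in> Ix n"
  have "(\<Sum>b\<in>Ix n. Rop n x a b * J2 n b d) = (\<Sum>c\<in>Ix n. J3 n x a c * (\<Sum>b\<in>Ix n. J2inv n c b * J2 n b d))"
    unfolding Rop_def mmul_def by (simp add: sum_distrib_left sum_distrib_right mult.assoc) (rule sum.swap)
  also have "\<dots> = (\<Sum>c\<in>Ix n. if c = d then J3 n x a d else 0)"
    by (intro sum.cong refl) (simp only: WJ2[OF d], simp)
  also have "\<dots> = J3 n x a d" using d by simp
  finally have L: "(\<Sum>b\<in>Ix n. Rop n x a b * J2 n b d) = J3 n x a d" .
  have "(\<Sum>c\<in>Ix n. J2 n a c * Rop n x d c) = (\<Sum>e\<in>Ix n. J3 n x d e * (\<Sum>c\<in>Ix n. J2 n a c * J2inv n e c))"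
    unfolding Rop_def mmul_def by (simp add: sum_distrib_left sum_distrib_right algebra_simps) (rule sum.swap)
  also have "\<dots> = (\<Sum>e\<in>Ix n. J3 n x d e * - (\<Sum>c\<in>Ix n. J2 n a c * J2inv n c e))"
    by (intro sum.cong refl) (subst W_anti, simp add: sum_negf[symmetric])
  also have "\<dots> = (\<Sum>e\<in>Ix n. if e = a then - J3 n x d a else 0)"
    by (intro sum.cong refl) (simp only: J2W[OF a], simp)
  also have "\<dots> = - J3 n x d a" using a by simp
  finally show ?thesis using L by (simp add: J3_def)
qed

lemma trm_Rop: "trm n (Rop n) x = 2 * h1 n x"
proof -
  have "trm n (Rop n) x = (\<Sum>a\<in>Ix n. \<Sum>k\<in>gK n. gf n k x * gC n k a a)"
    unfolding trm_def by (intro sum.cong refl) (simp add: Rgen)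
  also have "\<dots> = (\<Sum>k\<in>gK n. gf n k x * (pr n (gal n k) (gu n k) + pr n (gb n k) (gw n k)))"
    by (subst sum.swap) (simp add: gC_def pr_def sum_distrib_left sum.distrib algebra_simps)
  also have "\<dots> = (\<Sum>m\<in>{1..n}. exp (x (n + m)) * (-2)) + (\<Sum>j\<in>{1..<n}. exp (x (j + 1) - x j) * 2)"
    by (simp only: gK_sum) (intro arg_cong2[where f="(+)"] sum.cong refl; simp del: gsimps add: pr_PP_au pr_PP_bw pr_QQ_au pr_QQ_bw)
  also have "\<dots> = 2 * h1 n x"
  proof -
    have "{1..n - 1} = {1..<n::nat}" by auto
    then show ?thesis unfolding h1_def by (simp add: sum_distrib_left sum_distrib_right sum_negf algebra_simps)
  qed
  finally show ?thesis .
qed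

theorem mainTheorem2:
  fixes n :: nat
  assumes "n \<ge> 1"
  shows "(\<exists>h :: nat \<Rightarrow> pt \<Rightarrow> real.
            h 1 = h1 n \<and>
            (\<forall>j \<ge> 1. (\<forall>x c. (\<lambda>t. h j (x(c := t))) differentiable (at (x c))) \<and>
                      (\<forall>x. \<forall>a \<in> {1..2 * n}. chi n j x a = ham_vf n (\<lambda>x. J2 n) (h j) x a)) \<and>
            (\<forall>i j x. j \<ge> 1 \<longrightarrow> vapp n (Xf n i) (h j) x = real (i + j) * h (i + j) x))
       \<and> (\<forall>i j x. j \<ge> 2 \<longrightarrow> (\<forall>a \<in> {1..2 * n}. \<forall>b \<in> {1..2 * n}.
            lie_deriv n (Xf n i) (Jt n j) x a b = (real j - real i - 2) * Jt n (i + j) x a b))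
       \<and> (\<forall>i j x. \<forall>a \<in> {1..2 * n}.
            lie_bracket n (Xf n i) (Xf n j) x a = (real j - real i) * Xf n (i + j) x a)"
proof -
  interpret CH: chain3 n "Rop n"
  proof unfold_locales
    show "smT (Rop n)" by (rule smT_Rop)
    show "Ncond n (Rop n)" by (rule Ncond_Rop)
    show "\<And>x a b. a \<in> Ix n \<Longrightarrow> b \<in> Ix n \<Longrightarrow> vapp n (X0 n) (\<lambda>y. Rop n y a b) x = Rop n x a b"
      by (rule L0_Rop)
    show "\<And>x a c. a \<in> Ix n \<Longrightarrow> c \<in> Ix n \<Longrightarrow>
      (\<Sum>e\<in>Ix n. Rop n x e a * J2inv n e c) = (\<Sum>e\<in>Ix n. J2inv n a e * Rop n x e c)"
      by (rule Sym_Rop)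
    show "\<And>x d e c. d \<in> Ix n \<Longrightarrow> e \<in> Ix n \<Longrightarrow> c \<in> Ix n \<Longrightarrow> dOm n (Rop n) x d e c = - dOm n (Rop n) x d c e"
      by (rule dA_Rop)
    show "\<And>x d e c. d \<in> Ix n \<Longrightarrow> e \<in> Ix n \<Longrightarrow> c \<in> Ix n \<Longrightarrow>
      dOm n (Rop n) x d e c + dOm n (Rop n) x e c d + dOm n (Rop n) x c d e = 0"
      by (rule Cl_Rop)
    show "\<And>x a d. a \<in> Ix n \<Longrightarrow> d \<in> Ix n \<Longrightarrow> (\<Sum>b\<in>Ix n. Rop n x a b * J2 n b d) = (\<Sum>c\<in>Ix n. J2 n a c * Rop n x d c)"
      by (rule RJ_Rop)
  qed
  have Xf_eq: "Xf n i = CH.XX i" for i by (simp add: Xf_def CH.XX_def)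
  have h1eq: "CH.hh 1 = h1 n"
  proof
    fix x
    have "trm n (mpow n (Rop n) 1) x = trm n (Rop n) x"
      unfolding trm_def by (intro sum.cong refl) (simp add: mmul_mid_right)
    then show "CH.hh 1 x = h1 n x" unfolding CH.hh_def by (simp add: trm_Rop)
  qed
  have P1: "CH.hh 1 = h1 n \<and>
            (\<forall>j \<ge> 1. (\<forall>x c. (\<lambda>t. CH.hh j (x(c := t))) differentiable (at (x c))) \<and>
                      (\<forall>x. \<forall>a \<in> {1..2 * n}. chi n j x a = ham_vf n (\<lambda>x. J2 n) (CH.hh j) x a)) \<and>
            (\<forall>i j x. j \<ge> 1 \<longrightarrow> vapp n (Xf n i) (CH.hh j) x = real (i + j) * CH.hh (i + j) x)"
  proof (intro conjI allI impI ballI)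
    show "CH.hh 1 = h1 n" by (rule h1eq)
  next
    fix j :: nat and x :: pt and c :: nat assume "1 \<le> j"
    show "(\<lambda>t. CH.hh j (x(c := t))) differentiable (at (x c))"
      using CH.sm_hh[of j] unfolding sm_def by blast
  next
    fix j :: nat and x :: pt and a :: nat assume j: "1 \<le> j" and a: "a \<in> {1..2 * n}"
    have "chi n j x a = ((mvec n (Rop n) ^^ (j - 1)) (ham_vf n (\<lambda>x. J2 n) (CH.hh 1))) x a"
      unfolding chi_def h1eq ..
    also have "\<dots> = ham_vf n (\<lambda>x. J2 n) (CH.hh (Suc (j - 1))) x a"
      using a by (rule CH.chi_iter)
    finally show "chi n j x a = ham_vf n (\<lambda>x. J2 n) (CH.hh j) x a" using j by simp
  next
    fix i j :: nat and x :: pt assume j: "1 \<le> j"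
    show "vapp n (Xf n i) (CH.hh j) x = real (i + j) * CH.hh (i + j) x"
      unfolding Xf_eq using j by (rule CH.Xh)
  qed
  have P2: "\<forall>i j x. j \<ge> 2 \<longrightarrow> (\<forall>a \<in> {1..2 * n}. \<forall>b \<in> {1..2 * n}.
            lie_deriv n (Xf n i) (Jt n j) x a b = (real j - real i - 2) * Jt n (i + j) x a b)"
    unfolding Xf_eq Jt_def by (auto intro: CH.lieJ)
  have P3: "\<forall>i j x. \<forall>a \<in> {1..2 * n}.
            lie_bracket n (Xf n i) (Xf n j) x a = (real j - real i) * Xf n (i + j) x a"
    unfolding Xf_eq by (auto intro: CH.bracket_XX)
  show ?thesis using P1 P2 P3 by blast
qed

end
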